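(* Let $K$ be a field of characteristic $p>0$ such that $K/k$ is a finitely generated field extension, where $k=\bigcap_{n\ge0}K^{p^n}$. There is a bijection between power towers on $K$ and $K$-subalgebras $\mathcal{D}$ with $K\subseteq\mathcal{D}\subseteq\operatorname{Diff}_k(K)$, given by $W_\bullet\mapsto\operatorname{Diff}_{W_\bullet}(K):=\bigcup_{n\ge0}\operatorname{Diff}_{W_n}(K)$, with inverse $\mathcal{D}\mapsto(W_n)_{n\ge 0}$, $W_n=\{x\in K: xE=Ex\ \forall E\in\mathcal{D}_n\}$, where $\mathcal{D}_n=\mathcal{D}\cap\operatorname{Diff}_{K^{p^n}}(K)$. Moreover, $\dim_K(\mathcal{D}_i)=\dim_{W_i}(K)$ for all $i\ge 0$.
   Context: A power tower on $K$ is a sequence of subfields $W_0,W_1,\ldots$ of $K$ with $W_j=W_i\cdot K^{p^j}$ whenever $j\le i$ ($\cdot$ = compositum in $K$). For subfields $A\subseteq B$, $\operatorname{Diff}_A(B)$ is the union over $n\ge0$ of the sets of $A$-linear maps $D:B\to B$ with $[b_0,[b_1,[\ldots,[b_n,D]\ldots]]]=0$ for all $b_i\in B$ (elements of $B$ acting by multiplication, $[X,Y]=XY-YX$); it is a subalgebra of $\operatorname{End}_A(B)$ containing $B$. *)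

theory Defs
  imports Main "HOL-Library.Function_Algebras"
begin

text \<open>Throughout, the field K is the type 'a (so K = UNIV), and subfields of K are sets.\<close>

definition subfield :: "'a::field set \<Rightarrow> bool" where
  "subfield S \<longleftrightarrow> 0 \<in> S \<and> 1 \<in> S \<and>
     (\<forall>x\<in>S. \<forall>y\<in>S. x + y \<in> S \<and> x - y \<in> S \<and> x * y \<in> S) \<and>
     (\<forall>x\<in>S. inverse x \<in> S)"

definition gen_field :: "'a::field set \<Rightarrow> 'a set" where
  "gen_field A = \<Inter>{F. subfield F \<and> A \<subseteq> F}"

definition compositum :: "'a::field set \<Rightarrow> 'a set \<Rightarrow> 'a set" where
  "compositum A B = gen_field (A \<union> B)"

definition frob_pow :: "nat \<Rightarrow> nat \<Rightarrow> 'a::field set" where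
  "frob_pow p n = range (\<lambda>x::'a. x ^ (p ^ n))"

definition perfect_core :: "nat \<Rightarrow> 'a::field set" where
  "perfect_core p = (\<Inter>n. frob_pow p n)"

definition fin_gen_over :: "'a::field set \<Rightarrow> bool" where
  "fin_gen_over k \<longleftrightarrow> (\<exists>S. finite S \<and> gen_field (k \<union> S) = UNIV)"

definition power_tower :: "nat \<Rightarrow> (nat \<Rightarrow> 'a::field set) \<Rightarrow> bool" where
  "power_tower p W \<longleftrightarrow> (\<forall>i. subfield (W i)) \<and>
     (\<forall>i j. j \<le> i \<longrightarrow> W j = compositum (W i) (frob_pow p j))"

definition mult_op :: "'a::field \<Rightarrow> 'a \<Rightarrow> 'a" where
  "mult_op c = (\<lambda>x. c * x)"

definition comm_op :: "'a::field \<Rightarrow> ('a \<Rightarrow> 'a) \<Rightarrow> ('a \<Rightarrow> 'a)" where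
  "comm_op b D = (\<lambda>x. b * D x - D (b * x))"

fun diff_ord :: "nat \<Rightarrow> ('a::field \<Rightarrow> 'a) \<Rightarrow> bool" where
  "diff_ord 0 D = (\<forall>b. comm_op b D = 0)"
| "diff_ord (Suc n) D = (\<forall>b. diff_ord n (comm_op b D))"

definition linear_over :: "'a::field set \<Rightarrow> ('a \<Rightarrow> 'a) \<Rightarrow> bool" where
  "linear_over A D \<longleftrightarrow> (\<forall>x y. D (x + y) = D x + D y) \<and> (\<forall>a\<in>A. \<forall>x. D (a * x) = a * D x)"

definition Diff :: "'a::field set \<Rightarrow> ('a \<Rightarrow> 'a) set" where
  "Diff A = {D. linear_over A D \<and> (\<exists>n. diff_ord n D)}"

definition Diff_tower :: "(nat \<Rightarrow> 'a::field set) \<Rightarrow> ('a \<Rightarrow> 'a) set" where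
  "Diff_tower W = (\<Union>n. Diff (W n))"

definition K_subalgebra :: "('a::field \<Rightarrow> 'a) set \<Rightarrow> bool" where
  "K_subalgebra \<D> \<longleftrightarrow> (\<forall>c. mult_op c \<in> \<D>) \<and>
     (\<forall>E\<in>\<D>. \<forall>F\<in>\<D>. E + F \<in> \<D> \<and> E \<circ> F \<in> \<D>)"

definition D_level :: "nat \<Rightarrow> ('a::field \<Rightarrow> 'a) set \<Rightarrow> nat \<Rightarrow> ('a \<Rightarrow> 'a) set" where
  "D_level p \<D> n = \<D> \<inter> Diff (frob_pow p n)"

definition tower_of :: "nat \<Rightarrow> ('a::field \<Rightarrow> 'a) set \<Rightarrow> nat \<Rightarrow> 'a set" where
  "tower_of p \<D> n = {x. \<forall>E\<in>D_level p \<D> n. mult_op x \<circ> E = E \<circ> mult_op x}"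

definition span_over :: "'s set \<Rightarrow> ('s \<Rightarrow> 'v::comm_monoid_add \<Rightarrow> 'v) \<Rightarrow> 'v set \<Rightarrow> 'v set" where
  "span_over F sc B = {v. \<exists>S c. finite S \<and> S \<subseteq> B \<and> (\<forall>b\<in>S. c b \<in> F) \<and> v = (\<Sum>b\<in>S. sc (c b) b)}"

definition indep_over :: "'s::zero set \<Rightarrow> ('s \<Rightarrow> 'v::comm_monoid_add \<Rightarrow> 'v) \<Rightarrow> 'v set \<Rightarrow> bool" where
  "indep_over F sc B \<longleftrightarrow> (\<forall>S c. finite S \<and> S \<subseteq> B \<and> (\<forall>b\<in>S. c b \<in> F) \<and>
      (\<Sum>b\<in>S. sc (c b) b) = 0 \<longrightarrow> (\<forall>b\<in>S. c b = 0))"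

definition basis_over :: "'s::zero set \<Rightarrow> ('s \<Rightarrow> 'v::comm_monoid_add \<Rightarrow> 'v) \<Rightarrow> 'v set \<Rightarrow> 'v set \<Rightarrow> bool" where
  "basis_over F sc V B \<longleftrightarrow> B \<subseteq> V \<and> indep_over F sc B \<and> span_over F sc B = V"

text \<open>dim_{F1}(V1) = dim_{F2}(V2) as cardinals: there are bases of equal cardinality.\<close>
definition same_dim :: "'s::zero set \<Rightarrow> ('s \<Rightarrow> 'v::comm_monoid_add \<Rightarrow> 'v) \<Rightarrow> 'v set \<Rightarrow>
    't::zero set \<Rightarrow> ('t \<Rightarrow> 'w::comm_monoid_add \<Rightarrow> 'w) \<Rightarrow> 'w set \<Rightarrow> bool" where
  "same_dim F1 sc1 V1 F2 sc2 V2 \<longleftrightarrow> (\<exists>B1 B2 f. basis_over F1 sc1 V1 B1 \<and> basis_over F2 sc2 V2 B2 \<and>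
      bij_betw f B1 B2)"

end

theory Submission
  imports Defs "HOL-Computational_Algebra.Primes" "HOL-Library.Multiset"
begin

definition cent :: "('a::field \<Rightarrow> 'a) set \<Rightarrow> 'a set" where
  "cent X = {x. \<forall>E\<in>X. \<forall>y. x * E y = E (x * y)}"

lemma tower_of_cent: "tower_of p D n = cent (D_level p D n)"
  unfolding tower_of_def cent_def mult_op_def by (auto simp: fun_eq_iff)

definition spanF :: "'a::field set \<Rightarrow> 'a set \<Rightarrow> 'a set" where
  "spanF W M = {v. \<exists>c. (\<forall>b\<in>M. c b \<in> W) \<and> v = (\<Sum>b\<in>M. c b * b)}"

definition subsp :: "'a::field set \<Rightarrow> 'a set \<Rightarrow> bool" where
  "subsp W X \<longleftrightarrow> 0 \<in> X \<and> (\<forall>x\<in>X. \<forall>y\<in>X. x + y \<in> X) \<and> (\<forall>w\<in>W. \<forall>x\<in>X. w * x \<in> X)"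

definition additive :: "('a::field \<Rightarrow> 'a) \<Rightarrow> bool" where
  "additive E \<longleftrightarrow> (\<forall>x y. E (x + y) = E x + E y)"

lemma subsp_sum:
  assumes "subsp W X" "finite M" "\<forall>b\<in>M. f b \<in> X"
  shows "sum f M \<in> X"
  using assms(2,3) by (induction M rule: finite_induct) (use assms(1) in \<open>auto simp: subsp_def\<close>)

lemma span_least:
  assumes "finite M" "subsp W X" "M \<subseteq> X"
  shows "spanF W M \<subseteq> X"
proof
  fix v assume "v \<in> spanF W M"
  then obtain c where c: "\<forall>b\<in>M. c b \<in> W" "v = (\<Sum>b\<in>M. c b * b)" by (auto simp: spanF_def)
  show "v \<in> X" unfolding c(2)
    by (rule subsp_sum[OF assms(2,1)]) (use c(1) assms(2,3) in \<open>auto simp: subsp_def\<close>)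
qed

lemma subfieldD:
  assumes "subfield W"
  shows "0 \<in> W" "1 \<in> W" "x \<in> W \<Longrightarrow> y \<in> W \<Longrightarrow> x + y \<in> W"
    "x \<in> W \<Longrightarrow> y \<in> W \<Longrightarrow> x - y \<in> W" "x \<in> W \<Longrightarrow> y \<in> W \<Longrightarrow> x * y \<in> W"
    "x \<in> W \<Longrightarrow> inverse x \<in> W"
  using assms unfolding subfield_def by auto

lemma subfield_uminus: "subfield W \<Longrightarrow> x \<in> W \<Longrightarrow> - x \<in> W"
  using subfieldD(4)[of W 0 x] subfieldD(1)[of W] by simp

lemma subfield_divide: "subfield W \<Longrightarrow> x \<in> W \<Longrightarrow> y \<in> W \<Longrightarrow> x / y \<in> W"
  by (simp add: divide_inverse subfieldD)

lemma subfield_power: "subfield W \<Longrightarrow> x \<in> W \<Longrightarrow> x ^ n \<in> W"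
  by (induction n) (auto intro: subfieldD)

lemma subfield_sum:
  assumes "subfield W" "finite S" "\<forall>i\<in>S. f i \<in> W" shows "sum f S \<in> W"
  using assms(2,3) by (induction S rule: finite_induct) (auto intro: subfieldD[OF assms(1)])

lemma span_subsp:
  assumes "subfield W" "finite M"
  shows "subsp W (spanF W M)"
  unfolding subsp_def
proof (intro conjI ballI)
  show "0 \<in> spanF W M" unfolding spanF_def
    by (rule CollectI, rule exI[of _ "\<lambda>_. 0"]) (use assms in \<open>auto intro: subfieldD\<close>)
next
  fix x y assume "x \<in> spanF W M" "y \<in> spanF W M"
  then obtain c d where "\<forall>b\<in>M. c b \<in> W" "x = (\<Sum>b\<in>M. c b * b)" "\<forall>b\<in>M. d b \<in> W" "y = (\<Sum>b\<in>M. d b * b)"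
    by (auto simp: spanF_def)
  then show "x + y \<in> spanF W M" unfolding spanF_def
    by (intro CollectI exI[of _ "\<lambda>b. c b + d b"]) (auto simp: sum.distrib distrib_right intro: subfieldD[OF assms(1)])
next
  fix w x assume "w \<in> W" "x \<in> spanF W M"
  then obtain c where "\<forall>b\<in>M. c b \<in> W" "x = (\<Sum>b\<in>M. c b * b)"
    by (auto simp: spanF_def)
  then show "w * x \<in> spanF W M" unfolding spanF_def using \<open>w \<in> W\<close>
    by (intro CollectI exI[of _ "\<lambda>b. w * c b"]) (auto simp: sum_distrib_left mult.assoc intro: subfieldD[OF assms(1)])
qed

lemma span_base:
  assumes "subfield W" "finite M" "b \<in> M"
  shows "b \<in> spanF W M"
  unfolding spanF_def
proof (intro CollectI exI[of _ "\<lambda>x. if x = b then 1 else 0"] conjI)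
  show "\<forall>x\<in>M. (if x = b then 1 else 0) \<in> W" using subfieldD[OF assms(1)] by auto
  show "b = (\<Sum>x\<in>M. (if x = b then 1 else 0) * x)"
  proof -
    have "(\<Sum>x\<in>M. (if x = b then 1 else 0) * x) = (\<Sum>x\<in>M. if x = b then x else 0)"
      by (rule sum.cong) auto
    then show ?thesis using assms(2,3) by simp
  qed
qed

lemma span_mono:
  assumes "subfield W" "finite M'" "M \<subseteq> M'"
  shows "spanF W M \<subseteq> spanF W M'"
  by (rule span_least) (use assms finite_subset[OF assms(3,2)] span_subsp[OF assms(1,2)] span_base[OF assms(1,2)] in auto)

lemma span_scal_mono: "W \<subseteq> W' \<Longrightarrow> spanF W M \<subseteq> spanF W' M"
  unfolding spanF_def by blast

lemma gen_field_subfield: "subfield (gen_field A)"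
  unfolding gen_field_def subfield_def by blast

lemma gen_field_sup: "A \<subseteq> gen_field A"
  unfolding gen_field_def by blast

lemma gen_field_least: "subfield F \<Longrightarrow> A \<subseteq> F \<Longrightarrow> gen_field A \<subseteq> F"
  unfolding gen_field_def by blast

lemma additive_0: "additive E \<Longrightarrow> E 0 = 0"
  unfolding additive_def by (metis add_cancel_right_right add_0)

lemma additive_uminus: "additive E \<Longrightarrow> E (- x) = - E x"
  unfolding additive_def by (metis add.right_inverse additive_0 additive_def add_eq_0_iff2)

lemma additive_diff: "additive E \<Longrightarrow> E (x - y) = E x - E y"
  by (metis additive_def additive_uminus diff_conv_add_uminus)

lemma additive_sum: "additive E \<Longrightarrow> E (sum f S) = (\<Sum>i\<in>S. E (f i))"
  by (induction S rule: infinite_finite_induct) (auto simp: additive_0 additive_def)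

lemma linear_over_additive: "linear_over A E \<Longrightarrow> additive E"
  unfolding linear_over_def additive_def by blast

lemma linear_over_gen:
  assumes "linear_over A E"
  shows "linear_over (gen_field A) E"
proof -
  have ad: "additive E" using assms linear_over_additive by blast
  let ?S = "{a. \<forall>x. E (a * x) = a * E x}"
  have "subfield ?S" unfolding subfield_def
  proof (intro conjI ballI CollectI allI)
    fix x show "E (0 * x) = 0 * E x" using additive_0[OF ad] by simp
    show "E (1 * x) = 1 * E x" by simp
  next
    fix a b x assume a: "a \<in> ?S" and b: "b \<in> ?S"
    show "E ((a + b) * x) = (a + b) * E x" using a b ad by (simp add: distrib_right additive_def)
    show "E ((a - b) * x) = (a - b) * E x" using a b ad by (simp add: left_diff_distrib additive_diff)
    show "E ((a * b) * x) = (a * b) * E x" using a b by (simp add: mult.assoc)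
  next
    fix a x assume a: "a \<in> ?S"
    show "E (inverse a * x) = inverse a * E x"
    proof (cases "a = 0")
      case True then show ?thesis using additive_0[OF ad] by simp
    next
      case False
      have "a * E (inverse a * x) = E (a * (inverse a * x))" using a by simp
      also have "\<dots> = E x" using False by (simp add: mult.assoc[symmetric])
      finally show ?thesis using False by (simp add: field_simps)
    qed
  qed
  moreover have "A \<subseteq> ?S" using assms unfolding linear_over_def by auto
  ultimately have "gen_field A \<subseteq> ?S" by (rule gen_field_least)
  then show ?thesis using ad unfolding linear_over_def additive_def by auto
qed

lemma cent_subfield:
  assumes "\<forall>E\<in>X. additive E"
  shows "subfield (cent X)"
  unfolding subfield_def cent_def
proof (intro conjI ballI CollectI allI)
  fix E y assume "E \<in> X"
  then have ad: "additive E" using assms by blast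
  show "0 * E y = E (0 * y)" using additive_0[OF ad] by simp
  show "1 * E y = E (1 * y)" by simp
next
  fix a b E y assume a: "a \<in> {x. \<forall>E\<in>X. \<forall>y. x * E y = E (x * y)}" and b: "b \<in> {x. \<forall>E\<in>X. \<forall>y. x * E y = E (x * y)}" and E: "E \<in> X"
  then have ad: "additive E" using assms by blast
  show "(a + b) * E y = E ((a + b) * y)" using a b E ad by (simp add: distrib_right additive_def)
  show "(a - b) * E y = E ((a - b) * y)" using a b E ad by (simp add: left_diff_distrib additive_diff)
  show "(a * b) * E y = E ((a * b) * y)" using a b E by (simp add: mult.assoc)
next
  fix a E y assume a: "a \<in> {x. \<forall>E\<in>X. \<forall>y. x * E y = E (x * y)}" and E: "E \<in> X"
  then have ad: "additive E" using assms by blast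
  show "inverse a * E y = E (inverse a * y)"
  proof (cases "a = 0")
    case True then show ?thesis using additive_0[OF ad] by simp
  next
    case False
    have "a * E (inverse a * y) = E (a * (inverse a * y))" using a E by simp
    also have "\<dots> = E y" using False by (simp add: mult.assoc[symmetric])
    finally show ?thesis using False by (simp add: field_simps)
  qed
qed



lemma choose_char_sum:
  fixes g :: "nat \<Rightarrow> 'a::field"
  assumes "CHAR('a) = p" "prime p"
  shows "(\<Sum>k\<le>p. of_nat (p choose k) * g k) = g 0 + g p"
proof -
  have p0: "p \<noteq> 0" using assms(2) by auto
  have z: "\<forall>i\<in>{..p} - {0, p}. of_nat (p choose i) * g i = 0"
  proof
    fix i assume i: "i \<in> {..p} - {0, p}"
    then have "p dvd (p choose i)" using dvd_choose_prime[of i p] assms(2) by auto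
    then have "of_nat (p choose i) = (0::'a)" using assms(1) of_nat_eq_0_iff_char_dvd by metis
    then show "of_nat (p choose i) * g i = 0" by simp
  qed
  have "(\<Sum>k\<le>p. of_nat (p choose k) * g k) = (\<Sum>k\<in>{0,p}. of_nat (p choose k) * g k)"
    by (rule sum.mono_neutral_right) (use z in auto)
  also have "\<dots> = g 0 + g p" using p0 by simp
  finally show ?thesis .
qed

lemma frob_add:
  fixes x y :: "'a::field"
  assumes "CHAR('a) = p" "prime p"
  shows "(x + y) ^ p = x ^ p + y ^ p"
proof -
  have "(x + y) ^ p = (\<Sum>k\<le>p. of_nat (p choose k) * (x ^ k * y ^ (p - k)))"
    by (simp add: binomial_ring mult.assoc)
  also have "\<dots> = y ^ p + x ^ p" by (subst choose_char_sum[OF assms]) simp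
  finally show ?thesis by simp
qed

lemma frob_add_n:
  fixes x y :: "'a::field"
  assumes "CHAR('a) = p" "prime p"
  shows "(x + y) ^ (p ^ n) = x ^ (p ^ n) + y ^ (p ^ n)"
proof (induction n)
  case (Suc n)
  have "(x + y) ^ (p ^ Suc n) = ((x + y) ^ (p ^ n)) ^ p" by (simp only: power_Suc2 power_mult)
  also have "\<dots> = (x ^ (p ^ n)) ^ p + (y ^ (p ^ n)) ^ p" using Suc frob_add[OF assms] by simp
  finally show ?case by (simp only: power_Suc2 power_mult)
qed simp

lemma frob_diff_n:
  fixes x y :: "'a::field"
  assumes "CHAR('a) = p" "prime p"
  shows "(x - y) ^ (p ^ n) = x ^ (p ^ n) - y ^ (p ^ n)"
  using frob_add_n[OF assms, of "x - y" y n] by (simp add: algebra_simps)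

lemma frob_subfield:
  fixes p :: nat
  assumes "CHAR('a::field) = p" "prime p"
  shows "subfield (frob_pow p n :: 'a set)"
  unfolding subfield_def frob_pow_def
proof (intro conjI ballI)
  have p0: "p > 0" using assms(2) prime_gt_0_nat by blast
  show "(0::'a) \<in> range (\<lambda>x. x ^ p ^ n)" using p0 by (intro image_eqI[of _ _ 0]) auto
  show "(1::'a) \<in> range (\<lambda>x. x ^ p ^ n)" by (intro image_eqI[of _ _ 1]) auto
next
  fix x y :: 'a assume "x \<in> range (\<lambda>x. x ^ p ^ n)" "y \<in> range (\<lambda>x. x ^ p ^ n)"
  then obtain a b where ab: "x = a ^ p ^ n" "y = b ^ p ^ n" by auto
  show "x + y \<in> range (\<lambda>x. x ^ p ^ n)" using ab frob_add_n[OF assms] by (intro image_eqI[of _ _ "a + b"]) auto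
  show "x - y \<in> range (\<lambda>x. x ^ p ^ n)" using ab frob_diff_n[OF assms] by (intro image_eqI[of _ _ "a - b"]) auto
  show "x * y \<in> range (\<lambda>x. x ^ p ^ n)" using ab by (intro image_eqI[of _ _ "a * b"]) (auto simp: power_mult_distrib)
next
  fix x :: 'a assume "x \<in> range (\<lambda>x. x ^ p ^ n)"
  then obtain a where "x = a ^ p ^ n" by auto
  then show "inverse x \<in> range (\<lambda>x. x ^ p ^ n)" by (intro image_eqI[of _ _ "inverse a"]) (auto simp: power_inverse)
qed

lemma frob_anti:
  assumes "n \<le> m"
  shows "frob_pow p m \<subseteq> (frob_pow p n :: 'a::field set)"
proof
  fix x :: 'a assume "x \<in> frob_pow p m"
  then obtain a where a: "x = a ^ p ^ m" by (auto simp: frob_pow_def)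
  have "p ^ m = p ^ (m - n) * p ^ n" using assms by (simp add: power_add[symmetric])
  then have "x = (a ^ p ^ (m - n)) ^ p ^ n" using a by (simp add: power_mult)
  then show "x \<in> frob_pow p n" by (auto simp: frob_pow_def)
qed

lemma frob_0: "frob_pow p 0 = (UNIV :: 'a::field set)"
  by (auto simp: frob_pow_def)

lemma core_sub: "perfect_core p \<subseteq> (frob_pow p n :: 'a::field set)"
  by (auto simp: perfect_core_def)

lemma frob_mem: "x ^ (p ^ n) \<in> frob_pow p n"
  by (auto simp: frob_pow_def)

lemma diff_ord_iff:
  "diff_ord n D \<longleftrightarrow> (\<forall>bs. length bs = Suc n \<longrightarrow> fold comm_op bs D = 0)"
proof (induction n arbitrary: D)
  case 0
  show ?case
  proof
    assume "diff_ord 0 D" then show "\<forall>bs. length bs = Suc 0 \<longrightarrow> fold comm_op bs D = 0"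
      by (auto simp: length_Suc_conv)
  next
    assume "\<forall>bs. length bs = Suc 0 \<longrightarrow> fold comm_op bs D = 0"
    then show "diff_ord 0 D" by (auto dest: spec[of _ "[_]"])
  qed
next
  case (Suc n)
  show ?case
  proof
    assume A: "diff_ord (Suc n) D" 
    show "\<forall>bs. length bs = Suc (Suc n) \<longrightarrow> fold comm_op bs D = 0"
    proof (intro allI impI)
      fix bs :: "'a list" assume "length bs = Suc (Suc n)"
      then obtain b bs' where bs: "bs = b # bs'" "length bs' = Suc n" by (auto simp: length_Suc_conv)
      have "diff_ord n (comm_op b D)" using A by simp
      then have "fold comm_op bs' (comm_op b D) = 0" using Suc.IH bs(2) by blast
      then show "fold comm_op bs D = 0" using bs(1) by simp
    qed
  next
    assume H: "\<forall>bs. length bs = Suc (Suc n) \<longrightarrow> fold comm_op bs D = 0"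
    have "diff_ord n (comm_op b D)" for b
      unfolding Suc
    proof (intro allI impI)
      fix bs :: "'a list" assume "length bs = Suc n"
      then show "fold comm_op bs (comm_op b D) = 0" using H[rule_format, of "b # bs"] by simp
    qed
    then show "diff_ord (Suc n) D" by simp
  qed
qed

lemma comm_op_zero: "comm_op b 0 = 0"
  by (auto simp: comm_op_def fun_eq_iff)

lemma comm_op_zero': "comm_op b (\<lambda>x. 0) = (\<lambda>x. 0)"
  by (auto simp: comm_op_def fun_eq_iff)

lemma fold_comm_zero: "fold comm_op bs 0 = 0"
  by (induction bs) (auto simp: comm_op_zero comm_op_zero')

lemma diff_ord_long:
  assumes "diff_ord n D" "length bs \<ge> Suc n"
  shows "fold comm_op bs D = 0"
proof -
  have "length (take (Suc n) bs) = Suc n" using assms(2) by simp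
  then have "fold comm_op (take (Suc n) bs) D = 0" using assms(1) diff_ord_iff by blast
  moreover have "bs = take (Suc n) bs @ drop (Suc n) bs" by simp
  ultimately show ?thesis by (metis fold_append comp_apply fold_comm_zero)
qed

lemma comm_op_commute: "comm_op a \<circ> comm_op b = comm_op b \<circ> comm_op a"
  by (auto simp: comm_op_def fun_eq_iff algebra_simps)

lemma fold_comm_perm: "mset xs = mset ys \<Longrightarrow> fold comm_op xs = fold comm_op ys"
  by (rule fold_multiset_equiv) (auto simp: comm_op_commute)

definition Sop :: "nat \<Rightarrow> 'a::field \<Rightarrow> ('a \<Rightarrow> 'a) \<Rightarrow> 'a \<Rightarrow> 'a" where
  "Sop m h D x = (\<Sum>k\<le>m. of_nat (m choose k) * ((-1) ^ k * h ^ (m - k) * D (h ^ k * x)))"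

lemma Sop_step: "h * Sop m h D x - Sop m h D (h * x) = Sop (Suc m) h D x"
proof -
  define f where "f k = (-1) ^ k * h ^ (Suc m - k) * D (h ^ k * x)" for k
  have "Sop (Suc m) h D x = f 0 + (\<Sum>k\<le>m. of_nat (Suc m choose Suc k) * f (Suc k))"
    unfolding Sop_def f_def by (subst sum.atMost_Suc_shift) simp
  also have "\<dots> = (\<Sum>k\<le>m. of_nat (m choose k) * f (Suc k)) + (f 0 + (\<Sum>k\<le>m. of_nat (m choose Suc k) * f (Suc k)))"
    by (simp add: sum.distrib distrib_right)
  also have "f 0 + (\<Sum>k\<le>m. of_nat (m choose Suc k) * f (Suc k)) = (\<Sum>k\<le>Suc m. of_nat (m choose k) * f k)"
    by (subst sum.atMost_Suc_shift) simp
  also have "\<dots> = (\<Sum>k\<le>m. of_nat (m choose k) * f k)" by (simp add: binomial_eq_0)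
  also have "(\<Sum>k\<le>m. of_nat (m choose k) * f k) = h * Sop m h D x"
    unfolding Sop_def f_def sum_distrib_left
    by (rule sum.cong) (auto simp: Suc_diff_le algebra_simps)
  also have "(\<Sum>k\<le>m. of_nat (m choose k) * f (Suc k)) = - Sop m h D (h * x)"
    unfolding Sop_def f_def sum_negf[symmetric]
    by (rule sum.cong) (auto simp: algebra_simps)
  finally show ?thesis by simp
qed

lemma comm_pow_Sop: "(comm_op h ^^ m) D = Sop m h D"
proof (induction m)
  case 0 then show ?case by (simp add: Sop_def fun_eq_iff)
next
  case (Suc m)
  then show ?case by (simp add: fun_eq_iff comm_op_def Sop_step)
qed

lemma comm_pow_char:
  assumes "CHAR('a::field) = p" "prime p"
  shows "(comm_op (h::'a) ^^ p) D = comm_op (h ^ p) D"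
proof -
  have "Sop p h D x = h ^ p * D x + (-1) ^ p * D (h ^ p * x)" for x
    unfolding Sop_def by (subst choose_char_sum[OF assms]) simp
  moreover have "(-1::'a) ^ p = - 1" using minus_power_prime_CHAR[of p "1::'a"] assms by simp
  ultimately show ?thesis by (simp add: comm_pow_Sop comm_op_def fun_eq_iff)
qed

lemma comm_pow_char_n:
  assumes "CHAR('a::field) = p" "prime p"
  shows "fold comm_op (replicate (p ^ n) (h::'a)) = comm_op (h ^ (p ^ n))"
proof (induction n)
  case 0 then show ?case by simp
next
  case (Suc n)
  have "fold comm_op (replicate (p ^ Suc n) h) = (comm_op h ^^ (p ^ n)) ^^ p"
    by (simp add: funpow_mult mult.commute)
  also have "\<dots> = comm_op (h ^ p ^ n) ^^ p" using Suc by simp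
  also have "\<dots> = comm_op ((h ^ p ^ n) ^ p)" using comm_pow_char[OF assms] by (auto simp: fun_eq_iff)
  finally show ?case by (simp add: power_mult[symmetric] mult.commute)
qed



lemma subsp_pre:
  assumes "subsp L X"
  shows "subsp L {v. a * v \<in> X}"
  using assms unfolding subsp_def by (auto simp: distrib_left mult.left_commute)

lemma span_gen:
  assumes L: "subfield L" and q: "q > 0" and S: "finite S" "\<forall>s\<in>S. s ^ q \<in> L"
  shows "\<exists>M. finite M \<and> 1 \<in> spanF L M \<and> (\<forall>s\<in>S. \<forall>v\<in>spanF L M. s * v \<in> spanF L M)"
  using S
proof (induction S rule: finite_induct)
  case empty
  show ?case by (intro exI[of _ "{1}"]) (auto intro: span_base[OF L])
next
  case (insert s S)
  then obtain M where M: "finite M" "1 \<in> spanF L M" "\<forall>t\<in>S. \<forall>v\<in>spanF L M. t * v \<in> spanF L M" by auto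
  define M' where "M' = (\<lambda>(i, m). s ^ i * m) ` ({..<q} \<times> M)"
  have fM': "finite M'" using M(1) by (simp add: M'_def)
  have MM': "M \<subseteq> M'" unfolding M'_def using q by (force intro: image_eqI[of _ _ "(0, _)"])
  have sp': "subsp L (spanF L M')" using span_subsp[OF L fM'] .
  have base': "m \<in> M' \<Longrightarrow> m \<in> spanF L M'" for m using span_base[OF L fM'] .
  have pw: "s ^ i * v \<in> spanF L M'" if "i < q" "v \<in> spanF L M" for i v
  proof -
    have "spanF L M \<subseteq> {v. s ^ i * v \<in> spanF L M'}"
    proof (rule span_least[OF M(1) subsp_pre[OF sp']])
      show "M \<subseteq> {v. s ^ i * v \<in> spanF L M'}" using that(1) base' unfolding M'_def by auto
    qed
    then show ?thesis using that(2) by auto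
  qed
  have "1 \<in> spanF L M'" using span_mono[OF L fM' MM'] M(2) by auto
  moreover have "\<forall>t\<in>insert s S. \<forall>v\<in>spanF L M'. t * v \<in> spanF L M'"
  proof
    fix t assume t: "t \<in> insert s S"
    have "spanF L M' \<subseteq> {v. t * v \<in> spanF L M'}"
    proof (rule span_least[OF fM' subsp_pre[OF sp']])
      show "M' \<subseteq> {v. t * v \<in> spanF L M'}"
      proof
        fix x assume "x \<in> M'"
        then obtain i m where im: "i < q" "m \<in> M" "x = s ^ i * m" unfolding M'_def by auto
        show "x \<in> {v. t * v \<in> spanF L M'}"
        proof (cases "t = s")
          case True
          show ?thesis
          proof (cases "Suc i < q")
            case True
            then have "t * x \<in> M'" unfolding M'_def using im \<open>t = s\<close>
              by (intro image_eqI[of _ _ "(Suc i, m)"]) (auto simp: mult.assoc)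
            then show ?thesis using base' by auto
          next
            case False
            then have "Suc i = q" using im(1) by auto
            then have "t * x = s ^ q * m" using im \<open>t = s\<close> by (metis mult.assoc power_Suc)
            moreover have "s ^ q \<in> L" using insert.prems by auto
            moreover have "m \<in> spanF L M'" using base' MM' im(2) by auto
            ultimately show ?thesis using sp' unfolding subsp_def by auto
          qed
        next
          case False
          then have "t \<in> S" using t by auto
          then have "t * m \<in> spanF L M" using M(3) span_base[OF L M(1)] im(2) by auto
          then have "s ^ i * (t * m) \<in> spanF L M'" using pw im(1) by auto
          then show ?thesis using im(3) by (simp add: mult.left_commute)
        qed
      qed
    qed
    then show "\<forall>v\<in>spanF L M'. t * v \<in> spanF L M'" by auto
  qed
  ultimately show ?case using fM' by blast
qed

lemma fin_span:
  fixes p :: nat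
  assumes ch: "CHAR('a::field) = p" "prime p" and fg: "fin_gen_over (perfect_core p :: 'a set)"
  shows "\<exists>G. finite G \<and> spanF (frob_pow p n) G = (UNIV :: 'a set)"
proof -
  let ?L = "frob_pow p n :: 'a set"
  let ?q = "p ^ n"
  have L: "subfield ?L" using frob_subfield[OF ch] .
  have q: "?q > 0" using ch(2) prime_gt_0_nat by auto
  obtain S where S: "finite S" "gen_field (perfect_core p \<union> S) = (UNIV :: 'a set)"
    using fg unfolding fin_gen_over_def by blast
  have "\<forall>s\<in>S. s ^ ?q \<in> ?L" using frob_mem by blast
  then obtain M where M: "finite M" "1 \<in> spanF ?L M" "\<forall>s\<in>S. \<forall>v\<in>spanF ?L M. s * v \<in> spanF ?L M"
    using span_gen[OF L q S(1)] by blast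
  have sp: "subsp ?L (spanF ?L M)" using span_subsp[OF L M(1)] .
  let ?Z = "{x. \<forall>v\<in>spanF ?L M. x * v \<in> spanF ?L M}"
  have Lz: "?L \<subseteq> ?Z" using sp unfolding subsp_def by auto
  have zpow: "x \<in> ?Z \<Longrightarrow> x ^ k \<in> ?Z" for x k
  proof (induction k)
    case 0 then show ?case by simp
  next
    case (Suc k)
    show ?case
    proof (intro CollectI ballI)
      fix v assume v: "v \<in> spanF ?L M"
      have "x ^ k * v \<in> spanF ?L M" using Suc v by simp
      then have "x * (x ^ k * v) \<in> spanF ?L M" using Suc.prems by simp
      then show "x ^ Suc k * v \<in> spanF ?L M" by (simp add: mult.assoc)
    qed
  qed
  have sp0: "0 \<in> spanF ?L M" and spadd: "\<And>a b. a \<in> spanF ?L M \<Longrightarrow> b \<in> spanF ?L M \<Longrightarrow> a + b \<in> spanF ?L M"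
    and spsc: "\<And>w a. w \<in> ?L \<Longrightarrow> a \<in> spanF ?L M \<Longrightarrow> w * a \<in> spanF ?L M"
    using sp unfolding subsp_def by auto
  have "subfield ?Z" unfolding subfield_def
  proof (intro conjI ballI)
    show "0 \<in> ?Z" using sp0 by simp
    show "1 \<in> ?Z" by simp
  next
    fix x y assume x: "x \<in> ?Z" and y: "y \<in> ?Z"
    show "x + y \<in> ?Z"
    proof (intro CollectI ballI)
      fix v assume v: "v \<in> spanF ?L M"
      have "(x + y) * v = x * v + y * v" by (simp add: distrib_right)
      then show "(x + y) * v \<in> spanF ?L M" using spadd x y v by simp
    qed
    show "x * y \<in> ?Z"
    proof (intro CollectI ballI)
      fix v assume v: "v \<in> spanF ?L M"
      have "y * v \<in> spanF ?L M" using y v by simp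
      then have "x * (y * v) \<in> spanF ?L M" using x by simp
      then show "(x * y) * v \<in> spanF ?L M" by (simp add: mult.assoc)
    qed
    have m1: "-1 \<in> ?L" using subfield_uminus[OF L subfieldD(2)[OF L]] .
    show "x - y \<in> ?Z"
    proof (intro CollectI ballI)
      fix v assume v: "v \<in> spanF ?L M"
      have "(x - y) * v = x * v + (-1) * (y * v)" by (simp add: algebra_simps)
      moreover have "(-1) * (y * v) \<in> spanF ?L M" using y v by (intro spsc[OF m1]) simp
      moreover have "x * v + (-1) * (y * v) \<in> spanF ?L M" using x v \<open>(-1) * (y * v) \<in> spanF ?L M\<close> by (intro spadd) simp_all
      ultimately show "(x - y) * v \<in> spanF ?L M" by simp
    qed
  next
    fix x assume x: "x \<in> ?Z"
    show "inverse x \<in> ?Z"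
    proof (cases "x = 0")
      case True then show ?thesis using sp0 by simp
    next
      case False
      obtain r where r: "?q = Suc r" using q gr0_implies_Suc by blast
      have xr: "x ^ ?q = x * x ^ r" unfolding r by simp
      have "x ^ r \<noteq> 0" using False by simp
      then have inv: "inverse x = inverse (x ^ ?q) * x ^ r" unfolding xr
        by (simp add: inverse_mult_distrib)
      have iL: "inverse (x ^ ?q) \<in> ?L" using subfieldD(6)[OF L frob_mem] .
      have xq: "x ^ r \<in> ?Z" using zpow[OF x] .
      show ?thesis
      proof (intro CollectI ballI)
        fix v assume v: "v \<in> spanF ?L M"
        have "x ^ r * v \<in> spanF ?L M" using xq v by simp
        then have "inverse (x ^ ?q) * (x ^ r * v) \<in> spanF ?L M" using spsc[OF iL] by simp
        then show "inverse x * v \<in> spanF ?L M" by (simp add: inv mult.assoc)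
      qed
    qed
  qed
  moreover have "perfect_core p \<union> S \<subseteq> ?Z" using core_sub[of p n] Lz M(3) by blast
  ultimately have "gen_field (perfect_core p \<union> S) \<subseteq> ?Z" by (rule gen_field_least)
  then have "x \<in> ?Z" for x using S(2) by blast
  then have "\<forall>x. x * 1 \<in> spanF ?L M" using M(2) by blast
  then have "spanF ?L M = UNIV" by auto
  then show ?thesis using M(1) by blast
qed

lemma Diff_core_sub:
  fixes p :: nat
  assumes ch: "CHAR('a::field) = p" "prime p" and D: "D \<in> Diff (perfect_core p :: 'a set)"
  shows "\<exists>n. D \<in> Diff (frob_pow p n)"
proof -
  obtain N where N: "diff_ord N D" using D unfolding Diff_def by auto
  have ad: "additive D" using D linear_over_additive unfolding Diff_def by auto
  have p2: "p \<ge> 2" using ch(2) prime_ge_2_nat by auto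
  have "N < 2 ^ N" by (rule less_exp)
  also have "\<dots> \<le> p ^ N" using p2 by (simp add: power_mono)
  finally have "Suc N \<le> p ^ N" by simp
  have "g ^ (p ^ N) * D x = D (g ^ (p ^ N) * x)" for g x
  proof -
    have "fold comm_op (replicate (p ^ N) g) D = 0"
      by (rule diff_ord_long[OF N]) (use \<open>Suc N \<le> p ^ N\<close> in simp)
    then have "comm_op (g ^ (p ^ N)) D = 0" using comm_pow_char_n[OF ch] by simp
    then have "comm_op (g ^ (p ^ N)) D x = 0" by simp
    then show ?thesis by (simp add: comm_op_def)
  qed
  then have "linear_over (frob_pow p N) D" using ad unfolding linear_over_def additive_def frob_pow_def by auto
  then show ?thesis using N unfolding Diff_def by blast
qed



lemma sum_fun_apply: "(sum F S) x = (\<Sum>i\<in>S. F i x)"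
  by (induction S rule: infinite_finite_induct) auto

lemma lin_comm:
  assumes "linear_over L E" shows "linear_over L (comm_op b E)"
proof -
  have ad: "E (x + y) = E x + E y" for x y using assms unfolding linear_over_def by blast
  have li: "a \<in> L \<Longrightarrow> E (a * x) = a * E x" for a x using assms unfolding linear_over_def by blast
  have "comm_op b E (x + y) = comm_op b E x + comm_op b E y" for x y
    unfolding comm_op_def by (simp only: distrib_left ad) (simp add: algebra_simps)
  moreover have "comm_op b E (a * x) = a * comm_op b E x" if "a \<in> L" for a x
  proof -
    have e1: "E (b * (a * x)) = a * E (b * x)" by (simp only: mult.left_commute[of b a x] li[OF that])
    show ?thesis unfolding comm_op_def li[OF that] e1 by (simp add: algebra_simps)
  qed
  ultimately show ?thesis unfolding linear_over_def by blast
qed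

lemma comm_L0: "linear_over L E \<Longrightarrow> l \<in> L \<Longrightarrow> comm_op l E = 0"
  unfolding linear_over_def comm_op_def by (auto simp: fun_eq_iff)

lemma comm_add_b:
  assumes "additive E" shows "comm_op (a + b) E = comm_op a E + comm_op b E"
proof -
  have e: "E ((a + b) * x) = E (a * x) + E (b * x)" for x
    using assms unfolding additive_def by (simp add: distrib_right)
  show ?thesis unfolding comm_op_def fun_eq_iff plus_fun_apply e by (simp add: algebra_simps)
qed

lemma comm_add_E: "comm_op b (E + F) = comm_op b E + comm_op b F"
  unfolding comm_op_def by (auto simp: fun_eq_iff algebra_simps)

lemma comm_scal_E: "comm_op b (\<lambda>x. l * E x) = (\<lambda>x. l * comm_op b E x)"
  unfolding comm_op_def by (auto simp: fun_eq_iff algebra_simps)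

lemma comm_scal_b:
  assumes "linear_over L E" "l \<in> L" shows "comm_op (l * b) E = (\<lambda>x. l * comm_op b E x)"
proof -
  have li: "E (l * y) = l * E y" for y using assms unfolding linear_over_def by blast
  have e: "E (l * b * x) = l * E (b * x)" for x by (simp only: mult.assoc li)
  show ?thesis unfolding comm_op_def fun_eq_iff e by (simp add: algebra_simps)
qed

lemma comm_zero_b: "additive E \<Longrightarrow> comm_op 0 E = 0"
  unfolding comm_op_def by (auto simp: fun_eq_iff additive_0)

lemma comm_sum_b:
  assumes "linear_over L E" "finite G" "\<forall>g\<in>G. c g \<in> L"
  shows "comm_op (\<Sum>g\<in>G. c g * g) E = (\<Sum>g\<in>G. (\<lambda>x. c g * comm_op g E x))"
  using assms(2,3)
proof (induction G rule: finite_induct)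
  case empty then show ?case using comm_zero_b linear_over_additive[OF assms(1)] by (simp only: sum.empty)
next
  case (insert g G)
  have "comm_op (c g * g) E = (\<lambda>x. c g * comm_op g E x)" using comm_scal_b[OF assms(1)] insert.prems by auto
  moreover have "comm_op (\<Sum>g\<in>G. c g * g) E = (\<Sum>g\<in>G. (\<lambda>x. c g * comm_op g E x))" using insert by blast
  ultimately show ?case by (simp only: sum.insert[OF insert.hyps] comm_add_b[OF linear_over_additive[OF assms(1)]])
qed

lemma fold_add: "fold comm_op bs (E + F) = fold comm_op bs E + fold comm_op bs F"
  by (induction bs arbitrary: E F) (auto simp: comm_add_E)

lemma fold_scal: "fold comm_op bs (\<lambda>x. l * E x) = (\<lambda>x. l * fold comm_op bs E x)"
  by (induction bs arbitrary: E) (auto simp: comm_scal_E)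

lemma fold_sum: "fold comm_op bs (sum F S) = (\<Sum>i\<in>S. fold comm_op bs (F i))"
proof (induction S rule: infinite_finite_induct)
  case (infinite A) then show ?case by (simp only: sum.infinite[OF infinite] fold_comm_zero)
next
  case empty show ?case by (simp only: sum.empty fold_comm_zero)
next
  case (insert x S) then show ?case by (simp only: sum.insert[OF insert.hyps] fold_add)
qed

lemma lin_fold: "linear_over L E \<Longrightarrow> linear_over L (fold comm_op gs E)"
  by (induction gs arbitrary: E) (auto simp: lin_comm)

lemma finite_order:
  fixes L :: "'a::field set"
  assumes L: "subfield L" and G: "finite G" "spanF L G = UNIV"
    and qL: "\<forall>x. x ^ q \<in> L" and qc: "\<forall>h::'a. fold comm_op (replicate q h) = comm_op (h ^ q)"
    and E: "linear_over L E"
  shows "diff_ord (card G * (q - 1)) E"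
proof -
  have claim: "\<forall>gs E. linear_over L E \<longrightarrow> set gs \<subseteq> G \<longrightarrow>
      ((\<exists>g. count_list gs g \<ge> q) \<or> length bs + length gs > card G * (q - 1)) \<longrightarrow>
      fold comm_op bs (fold comm_op gs E) = 0" for bs
  proof (induction bs)
    case Nil
    show ?case
    proof (intro allI impI)
      fix gs E assume E: "linear_over L E" and gs: "set gs \<subseteq> G"
        and C: "(\<exists>g. count_list gs g \<ge> q) \<or> length [] + length gs > card G * (q - 1)"
      have "\<exists>g. count_list gs g \<ge> q"
      proof (rule ccontr)
        assume nex: "\<not> (\<exists>g. count_list gs g \<ge> q)"
        have lt: "count_list gs g \<le> q - 1" for g
        proof -
          have "\<not> q \<le> count_list gs g" using nex by blast
          then show ?thesis by linarith
        qed
        have "length gs = sum (count_list gs) G" using sum_count_set[OF gs G(1)] by (rule sym)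
        also have "\<dots> \<le> sum (\<lambda>g. q - 1) G" by (rule sum_mono) (rule lt)
        also have "\<dots> = card G * (q - 1)" by simp
        finally have "length gs \<le> card G * (q - 1)" .
        moreover have "length gs > card G * (q - 1)" using C nex by simp
        ultimately show False by linarith
      qed
      then obtain g where g: "count_list gs g \<ge> q" by blast
      obtain rest where rest: "mset rest = mset gs - replicate_mset q g" using ex_mset by blast
      have sub: "replicate_mset q g \<subseteq># mset gs"
        unfolding subseteq_mset_def
      proof
        fix a show "count (replicate_mset q g) a \<le> count (mset gs) a"
          using g by (simp add: count_mset)
      qed
      have "mset (replicate q g @ rest) = replicate_mset q g + (mset gs - replicate_mset q g)"
        by (simp add: rest)
      also have "\<dots> = mset gs" by (rule subset_mset.add_diff_inverse[OF sub])
      finally have "fold comm_op gs = fold comm_op (replicate q g @ rest)"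
        by (intro fold_comm_perm) simp
      then have "fold comm_op gs E = fold comm_op (replicate q g @ rest) E" by simp
      also have "\<dots> = fold comm_op rest (fold comm_op (replicate q g) E)"
        by (simp only: fold_append comp_apply)
      also have "fold comm_op (replicate q g) E = comm_op (g ^ q) E"
      proof -
        have "fold comm_op (replicate q g) = comm_op (g ^ q)" using qc by blast
        then show ?thesis by (rule fun_cong)
      qed
      also have "comm_op (g ^ q) E = 0" using comm_L0[OF E] qL by blast
      finally have X: "fold comm_op gs E = fold comm_op rest 0" .
      show "fold comm_op [] (fold comm_op gs E) = 0" unfolding X fold_simps(1) by (rule fold_comm_zero)
    qed
  next
    case (Cons b bs)
    show ?case
    proof (intro allI impI)
      fix gs E assume E: "linear_over L E" and gs: "set gs \<subseteq> G"
        and C: "(\<exists>g. count_list gs g \<ge> q) \<or> length (b # bs) + length gs > card G * (q - 1)"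
      let ?F = "fold comm_op gs E"
      have F: "linear_over L ?F" using lin_fold[OF E] .
      obtain c where c: "\<forall>g\<in>G. c g \<in> L" "b = (\<Sum>g\<in>G. c g * g)"
        using G(2) unfolding spanF_def by blast
      have "fold comm_op (b # bs) ?F = fold comm_op bs (comm_op b ?F)" by simp
      also have "\<dots> = fold comm_op bs (\<Sum>g\<in>G. (\<lambda>x. c g * comm_op g ?F x))"
        using comm_sum_b[OF F G(1) c(1)] c(2) by simp
      also have "\<dots> = (\<Sum>g\<in>G. (\<lambda>x. c g * fold comm_op bs (comm_op g ?F) x))"
        by (simp add: fold_sum fold_scal)
      also have "\<dots> = (\<Sum>g\<in>G. (\<lambda>x. c g * 0))"
      proof (rule sum.cong[OF refl])
        fix g assume g: "g \<in> G"
        have cnt: "count_list (gs @ [g]) h \<ge> count_list gs h" for h by simp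
        have C': "(\<exists>h. count_list (gs @ [g]) h \<ge> q) \<or> length bs + length (gs @ [g]) > card G * (q - 1)"
          using C
        proof (elim disjE exE)
          fix h assume "q \<le> count_list gs h"
          then have "q \<le> count_list (gs @ [g]) h" using cnt[of h] by linarith
          then show ?thesis by blast
        next
          assume "card G * (q - 1) < length (b # bs) + length gs"
          then show ?thesis by simp
        qed
        have gs': "set (gs @ [g]) \<subseteq> G" using gs g by simp
        have "fold comm_op bs (fold comm_op (gs @ [g]) E) = 0"
          using Cons.IH[rule_format, OF E gs' C'] .
        then show "(\<lambda>x. c g * fold comm_op bs (comm_op g ?F) x) = (\<lambda>x. c g * 0)" by simp
      qed
      also have "\<dots> = 0" by (simp add: fun_eq_iff sum_fun_apply)
      finally show "fold comm_op (b # bs) (fold comm_op gs E) = 0" .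
    qed
  qed
  show ?thesis unfolding diff_ord_iff
  proof (intro allI impI)
    fix bs :: "'a list" assume "length bs = Suc (card G * (q - 1))"
    then have "length bs + length ([]::'a list) > card G * (q - 1)" by simp
    moreover have "set ([]::'a list) \<subseteq> G" by simp
    ultimately have "fold comm_op bs (fold comm_op [] E) = 0" using claim[of bs, rule_format, OF E] by blast
    then show "fold comm_op bs E = 0" by simp
  qed
qed



lemma cent_lin: "E \<in> X \<Longrightarrow> w \<in> cent X \<Longrightarrow> E (w * y) = w * E y"
  unfolding cent_def by auto

lemma lin_sum:
  assumes "additive E" "\<forall>a\<in>W. \<forall>y. E (a * y) = a * E y" "\<forall>b\<in>S. c b \<in> W"
  shows "E (\<Sum>b\<in>S. c b * b) = (\<Sum>b\<in>S. c b * E b)"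
proof -
  have "E (\<Sum>b\<in>S. c b * b) = (\<Sum>b\<in>S. E (c b * b))" using additive_sum[OF assms(1)] .
  also have "\<dots> = (\<Sum>b\<in>S. c b * E b)" using assms(2,3) by (intro sum.cong) auto
  finally show ?thesis .
qed

lemma span_insert:
  assumes W: "subfield W" and S: "finite S" and z: "z \<in> spanF W S" and w: "w \<in> W"
  shows "z + w * u \<in> spanF W (insert u S)"
proof -
  have f: "finite (insert u S)" using S by simp
  have sp: "subsp W (spanF W (insert u S))" using span_subsp[OF W f] .
  have "z \<in> spanF W (insert u S)" using span_mono[OF W f, of S] z by auto
  moreover have "u \<in> spanF W (insert u S)" using span_base[OF W f] by simp
  moreover have "w * u \<in> spanF W (insert u S)" using sp w calculation(2) unfolding subsp_def by blast
  ultimately show ?thesis using sp unfolding subsp_def by blast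
qed

lemma span_0: "0 \<in> spanF W S" if "subfield W" "finite S"
  using span_subsp[OF that] unfolding subsp_def by blast

lemma density:
  fixes Dp :: "('a::field \<Rightarrow> 'a) set"
  assumes add: "\<forall>E\<in>Dp. additive E" and mult: "\<forall>c. mult_op c \<in> Dp"
    and cl: "\<forall>E\<in>Dp. \<forall>F\<in>Dp. E + F \<in> Dp \<and> E \<circ> F \<in> Dp" and fin: "finite S"
  shows "\<forall>x. x \<notin> spanF (cent Dp) S \<longrightarrow> (\<exists>r\<in>Dp. (\<forall>s\<in>S. r s = 0) \<and> r x \<noteq> 0)"
  using fin
proof (induction S rule: finite_induct)
  let ?W = "cent Dp"
  have W: "subfield ?W" using cent_subfield add by blast
  case empty
  show ?case
  proof (intro allI impI)
    fix x assume "x \<notin> spanF ?W {}"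
    moreover have "0 \<in> spanF ?W {}" using span_0[OF W finite.emptyI] .
    ultimately have x0: "x \<noteq> 0" by metis
    have m1: "mult_op 1 \<in> Dp" using mult by blast
    have "mult_op 1 x = x" by (simp add: mult_op_def)
    then show "\<exists>r\<in>Dp. (\<forall>s\<in>{}. r s = 0) \<and> r x \<noteq> 0" using m1 x0 by (intro bexI[of _ "mult_op 1"]) simp_all
  qed
next
  let ?W = "cent Dp"
  have W: "subfield ?W" using cent_subfield add by blast
  case (insert u S)
  show ?case
  proof (intro allI impI)
    fix x assume x: "x \<notin> spanF ?W (insert u S)"
    have rlin: "r (\<Sum>b\<in>S. c b * b) = (\<Sum>b\<in>S. c b * r b)" if "r \<in> Dp" "\<forall>b\<in>S. c b \<in> ?W" for r c
    proof (rule lin_sum)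
      show "additive r" using add that(1) by blast
      show "\<forall>a\<in>?W. \<forall>y. r (a * y) = a * r y" using cent_lin[OF that(1)] by blast
    qed (rule that(2))
    show "\<exists>r\<in>Dp. (\<forall>s\<in>insert u S. r s = 0) \<and> r x \<noteq> 0"
    proof (cases "u \<in> spanF ?W S")
      case True
      have "x \<notin> spanF ?W S" using x span_mono[OF W, of "insert u S" S] insert.hyps(1) by auto
      then obtain r where r: "r \<in> Dp" "\<forall>s\<in>S. r s = 0" "r x \<noteq> 0" using insert.IH by blast
      obtain c where c: "\<forall>b\<in>S. c b \<in> ?W" "u = (\<Sum>b\<in>S. c b * b)" using True unfolding spanF_def by blast
      have "r u = 0" using rlin[OF r(1) c(1)] c(2) r(2) by simp
      then show ?thesis using r by auto
    next
      case False
      show ?thesis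
      proof (rule ccontr)
        assume H0: "\<not> ?thesis"
        have H: "r \<in> Dp \<Longrightarrow> \<forall>s\<in>S. r s = 0 \<Longrightarrow> r u = 0 \<Longrightarrow> r x = 0" for r
          using H0 by auto
        let ?I = "{r\<in>Dp. \<forall>s\<in>S. r s = 0}"
        obtain r0 where r0: "r0 \<in> ?I" "r0 u \<noteq> 0" using insert.IH False by blast
        have comp: "E \<circ> r \<in> ?I" if "E \<in> Dp" "r \<in> ?I" for E r
        proof -
          have "E \<circ> r \<in> Dp" using cl that by blast
          moreover have "E 0 = 0" using add that(1) additive_0 by blast
          ultimately show ?thesis using that(2) by simp
        qed
        have multI: "mult_op c \<circ> r \<in> ?I" if "r \<in> ?I" for c r
          using comp[OF _ that] mult by blast
        have key: "r x = r' x" if "r \<in> ?I" "r' \<in> ?I" "r u = r' u" for r r'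
        proof -
          let ?d = "r + (mult_op (-1) \<circ> r')"
          have "mult_op (-1) \<circ> r' \<in> Dp" using that(2) cl mult by blast
          moreover have "r \<in> Dp" using that(1) by simp
          ultimately have "?d \<in> Dp" using cl by blast
          moreover have "\<forall>s\<in>S. ?d s = 0" using that(1,2) by (simp add: mult_op_def)
          moreover have "?d u = 0" using that(3) by (simp add: mult_op_def)
          ultimately have "?d x = 0" by (rule H)
          then show ?thesis by (simp add: mult_op_def)
        qed
        define r1 where "r1 = mult_op (inverse (r0 u)) \<circ> r0"
        have r1: "r1 \<in> ?I" "r1 u = 1" using multI[OF r0(1)] r0(2) by (auto simp: r1_def mult_op_def)
        define w where "w = r1 x"
        have rx: "r x = r u * w" if "r \<in> ?I" for r
        proof -
          have m: "mult_op (r u) \<circ> r1 \<in> ?I" using multI[OF r1(1)] .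
          have mu: "(mult_op (r u) \<circ> r1) u = r u" using r1(2) by (simp add: mult_op_def)
          have "r x = (mult_op (r u) \<circ> r1) x" using key[OF that m mu[symmetric]] .
          then show ?thesis by (simp add: mult_op_def w_def)
        qed
        have wW: "w \<in> ?W" unfolding cent_def
        proof (intro CollectI ballI allI)
          fix E y assume E: "E \<in> Dp"
          have ry: "mult_op y \<circ> r1 \<in> ?I" using multI[OF r1(1)] .
          have ryu: "(mult_op y \<circ> r1) u = y" using r1(2) by (simp add: mult_op_def)
          have "(E \<circ> (mult_op y \<circ> r1)) x = (E \<circ> (mult_op y \<circ> r1)) u * w" using rx[OF comp[OF E ry]] .
          moreover have "(mult_op y \<circ> r1) x = y * w" using rx[OF ry] ryu by simp
          ultimately have "E (y * w) = E y * w" using ryu by simp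
          then show "w * E y = E (w * y)" by (simp add: mult.commute)
        qed
        let ?z = "x - w * u"
        have "r ?z = 0" if "r \<in> ?I" for r
        proof -
          have ad: "additive r" using that add by blast
          have "r ?z = r x - r (w * u)" using additive_diff[OF ad] by simp
          also have "r (w * u) = w * r u" using cent_lin[OF _ wW] that by blast
          finally show ?thesis using rx[OF that] by (simp add: mult.commute)
        qed
        then have "?z \<in> spanF ?W S" using insert.IH by blast
        then have "?z + w * u \<in> spanF ?W (insert u S)" using span_insert[OF W insert.hyps(1) _ wW] by blast
        then show False using x by simp
      qed
    qed
  qed
qed

definition indepF :: "'a::field set \<Rightarrow> 'a set \<Rightarrow> bool" where
  "indepF W B \<longleftrightarrow> (\<forall>c. (\<forall>b\<in>B. c b \<in> W) \<and> (\<Sum>b\<in>B. c b * b) = 0 \<longrightarrow> (\<forall>b\<in>B. c b = 0))"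

lemma basis_exists:
  fixes W :: "'a::field set"
  assumes W: "subfield W" and G: "finite G" "spanF W G = UNIV"
  shows "\<exists>B. finite B \<and> 1 \<in> B \<and> spanF W B = UNIV \<and> indepF W B"
proof -
  let ?P = "\<lambda>T. T \<subseteq> insert 1 G \<and> 1 \<in> T \<and> spanF W T = UNIV"
  have "?P (insert 1 G)" using span_mono[OF W, of "insert 1 G" G] G by auto
  then obtain T where T: "?P T" and minT: "\<And>T'. ?P T' \<Longrightarrow> card T \<le> card T'"
    using ex_has_least_nat[of ?P "insert 1 G" card] by blast
  have fT: "finite T" using T G(1) finite_subset by blast
  have "indepF W T" unfolding indepF_def
  proof (intro allI impI ballI)
    fix c b0 assume c: "(\<forall>b\<in>T. c b \<in> W) \<and> (\<Sum>b\<in>T. c b * b) = 0" and b0: "b0 \<in> T"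
    show "c b0 = 0"
    proof (rule ccontr)
      assume cb0: "c b0 \<noteq> 0"
      show False
      proof (cases "\<exists>b1\<in>T. b1 \<noteq> 1 \<and> c b1 \<noteq> 0")
        case True
        then obtain b1 where b1: "b1 \<in> T" "b1 \<noteq> 1" "c b1 \<noteq> 0" by blast
        let ?T' = "T - {b1}"
        have fT': "finite ?T'" using fT by simp
        have "0 = c b1 * b1 + (\<Sum>b\<in>?T'. c b * b)" using c sum.remove[OF fT b1(1), of "\<lambda>b. c b * b"] by simp
        then have "c b1 * b1 = - (\<Sum>b\<in>?T'. c b * b)" by (simp add: eq_neg_iff_add_eq_0)
        then have cb: "c b1 * b1 = - (\<Sum>b\<in>?T'. c b * b)" .
        have "b1 = (c b1 * b1) / c b1" using b1(3) by simp
        also have "\<dots> = - (\<Sum>b\<in>?T'. c b * b) / c b1" by (simp only: cb)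
        finally have e1: "b1 = - (\<Sum>b\<in>?T'. c b * b) / c b1" .
        have "- (\<Sum>b\<in>?T'. c b * b) / c b1 = (\<Sum>b\<in>?T'. - (c b * b)) / c b1" by (simp add: sum_negf)
        also have "\<dots> = (\<Sum>b\<in>?T'. - (c b * b) / c b1)" by (rule sum_divide_distrib)
        also have "\<dots> = (\<Sum>b\<in>?T'. (- c b / c b1) * b)" by (rule sum.cong) auto
        finally have "b1 = (\<Sum>b\<in>?T'. (- c b / c b1) * b)" using e1 by simp
        moreover have "\<forall>b\<in>?T'. - c b / c b1 \<in> W"
          using c b1 W by (auto intro!: subfield_divide subfield_uminus)
        ultimately have "b1 \<in> spanF W ?T'" unfolding spanF_def
          by (intro CollectI exI[of _ "\<lambda>b. - c b / c b1"]) blast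
        then have "T \<subseteq> spanF W ?T'" using span_base[OF W fT'] by blast
        then have "spanF W T \<subseteq> spanF W ?T'" by (rule span_least[OF fT span_subsp[OF W fT']])
        then have "?P ?T'" using T b1(2) by auto
        then have "card T \<le> card ?T'" by (rule minT)
        moreover have "card ?T' < card T" by (rule card_Diff1_less[OF fT b1(1)])
        ultimately show False by simp
      next
        case False
        then have z: "\<forall>b\<in>T - {1}. c b * b = 0" by auto
        have "1 \<in> T" using T by blast
        have "(\<Sum>b\<in>T. c b * b) = c 1 * 1 + (\<Sum>b\<in>T - {1}. c b * b)"
          by (rule sum.remove[OF fT \<open>1 \<in> T\<close>])
        also have "(\<Sum>b\<in>T - {1}. c b * b) = 0" using z by (intro sum.neutral) blast
        finally have "c 1 = 0" using c by simp
        then show False using False cb0 b0 by auto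
      qed
    qed
  qed
  then show ?thesis using T fT by blast
qed



definition coord :: "'a::field set \<Rightarrow> 'a set \<Rightarrow> 'a \<Rightarrow> 'a \<Rightarrow> 'a" where
  "coord W B b x = (SOME c. (\<forall>b\<in>B. c b \<in> W) \<and> x = (\<Sum>b\<in>B. c b * b)) b"

lemma coord_rep:
  assumes "spanF W B = UNIV"
  shows "(\<forall>b\<in>B. coord W B b x \<in> W) \<and> x = (\<Sum>b\<in>B. coord W B b x * b)"
proof -
  have "\<exists>c. (\<forall>b\<in>B. c b \<in> W) \<and> x = (\<Sum>b\<in>B. c b * b)" using assms unfolding spanF_def by blast
  then have "(\<lambda>c. (\<forall>b\<in>B. c b \<in> W) \<and> x = (\<Sum>b\<in>B. c b * b)) (SOME c. (\<forall>b\<in>B. c b \<in> W) \<and> x = (\<Sum>b\<in>B. c b * b))"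
    by (rule someI_ex)
  then show ?thesis unfolding coord_def by simp
qed

lemma coord_unique:
  assumes W: "subfield W" and fB: "finite B" and sp: "spanF W B = UNIV" and ind: "indepF W B"
    and c: "\<forall>b\<in>B. c b \<in> W" "x = (\<Sum>b\<in>B. c b * b)" and b: "b \<in> B"
  shows "coord W B b x = c b"
proof -
  have r: "\<forall>b\<in>B. coord W B b x \<in> W" "x = (\<Sum>b\<in>B. coord W B b x * b)" using coord_rep[OF sp] by blast+
  let ?d = "\<lambda>b. c b - coord W B b x"
  have "\<forall>b\<in>B. ?d b \<in> W" using c(1) r(1) subfieldD(4)[OF W] by blast
  moreover have "(\<Sum>b\<in>B. ?d b * b) = 0"
  proof -
    have "(\<Sum>b\<in>B. ?d b * b) = (\<Sum>b\<in>B. c b * b) - (\<Sum>b\<in>B. coord W B b x * b)"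
      by (simp add: left_diff_distrib sum_subtractf)
    also have "\<dots> = 0" using c(2) r(2) by simp
    finally show ?thesis .
  qed
  moreover have "(\<forall>b\<in>B. ?d b \<in> W) \<and> (\<Sum>b\<in>B. ?d b * b) = 0 \<longrightarrow> (\<forall>b\<in>B. ?d b = 0)"
    using ind unfolding indepF_def by (rule spec)
  ultimately have "?d b = 0" using b by blast
  then show ?thesis by simp
qed

context
  fixes W B :: "'a::field set"
  assumes W: "subfield W" and fB: "finite B" and sp: "spanF W B = UNIV" and ind: "indepF W B"
begin

lemma coord_W: "coord W B b x \<in> W" if "b \<in> B"
  using coord_rep[OF sp] that by blast

lemma coord_x: "x = (\<Sum>b\<in>B. coord W B b x * b)"
  using coord_rep[OF sp] by blast

lemma coord_add: "coord W B b (x + y) = coord W B b x + coord W B b y" if "b \<in> B"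
proof (rule coord_unique[OF W fB sp ind _ _ that])
  show "\<forall>b\<in>B. coord W B b x + coord W B b y \<in> W" using coord_W subfieldD(3)[OF W] by blast
  have "x + y = (\<Sum>b\<in>B. coord W B b x * b) + (\<Sum>b\<in>B. coord W B b y * b)"
    using coord_x[of x] coord_x[of y] by (rule arg_cong2[where f="(+)"])
  also have "\<dots> = (\<Sum>b\<in>B. (coord W B b x + coord W B b y) * b)"
    by (simp add: distrib_right sum.distrib)
  finally show "x + y = (\<Sum>b\<in>B. (coord W B b x + coord W B b y) * b)" .
qed

lemma coord_scal: "coord W B b (w * x) = w * coord W B b x" if "b \<in> B" "w \<in> W"
proof (rule coord_unique[OF W fB sp ind _ _ that(1)])
  show "\<forall>b\<in>B. w * coord W B b x \<in> W" using coord_W subfieldD(5)[OF W] that(2) by blast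
  from coord_x[of x] have "w * x = w * (\<Sum>b\<in>B. coord W B b x * b)" by (rule arg_cong)
  also have "\<dots> = (\<Sum>b\<in>B. (w * coord W B b x) * b)" by (simp add: sum_distrib_left mult.assoc)
  finally show "w * x = (\<Sum>b\<in>B. (w * coord W B b x) * b)" .
qed

lemma coord_basis: "coord W B b b' = (if b = b' then 1 else 0)" if "b \<in> B" "b' \<in> B"
proof -
  have "coord W B b b' = (\<lambda>b. if b = b' then 1 else 0) b"
  proof (rule coord_unique[OF W fB sp ind _ _ that(1)])
    show "\<forall>b\<in>B. (if b = b' then 1 else 0) \<in> W" using subfieldD(1,2)[OF W] by simp
    have "(\<Sum>b\<in>B. (if b = b' then 1 else 0) * b) = (\<Sum>b\<in>B. if b = b' then b else 0)"
      by (rule sum.cong) auto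
    also have "\<dots> = b'" using fB that(2) by simp
    finally show "b' = (\<Sum>b\<in>B. (if b = b' then 1 else 0) * b)" by simp
  qed
  then show ?thesis by simp
qed

lemma coord_lin: "linear_over W (coord W B b)" if "b \<in> B"
  unfolding linear_over_def using coord_add[OF that] coord_scal[OF that] by blast

lemma coord_inj: "inj_on (coord W B) B"
proof (rule inj_onI)
  fix b b' assume b: "b \<in> B" "b' \<in> B" "coord W B b = coord W B b'"
  then have e: "coord W B b b = coord W B b' b" by simp
  have "coord W B b' b = 1" using e coord_basis[OF b(1) b(1)] by simp
  then have "(if b' = b then 1 else 0) = (1::'a)" using coord_basis[OF b(2) b(1)] by simp
  then show "b = b'" by (simp split: if_splits)
qed

end

lemma Dp_sum:
  assumes mult: "\<forall>c. mult_op c \<in> Dp" and cl: "\<forall>E\<in>Dp. \<forall>F\<in>Dp. E + F \<in> Dp \<and> E \<circ> F \<in> Dp"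
    and "finite S" "\<forall>i\<in>S. f i \<in> Dp"
  shows "sum f S \<in> Dp"
  using assms(3,4)
proof (induction S rule: finite_induct)
  case empty
  have "mult_op 0 = (0 :: 'a \<Rightarrow> 'a::field)" by (simp add: mult_op_def fun_eq_iff)
  then show ?case using mult by (metis sum.empty)
next
  case (insert x S)
  have "f x \<in> Dp" "sum f S \<in> Dp" using insert by auto
  then show ?case using cl by (simp only: sum.insert[OF insert.hyps])
qed

lemma JB:
  fixes Dp :: "('a::field \<Rightarrow> 'a) set"
  assumes add: "\<forall>E\<in>Dp. additive E" and mult: "\<forall>c. mult_op c \<in> Dp"
    and cl: "\<forall>E\<in>Dp. \<forall>F\<in>Dp. E + F \<in> Dp \<and> E \<circ> F \<in> Dp"
    and G: "finite G" "spanF (cent Dp) G = UNIV"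
  shows "Dp = {E. linear_over (cent Dp) E}"
proof
  let ?W = "cent Dp"
  have W: "subfield ?W" using cent_subfield add by blast
  have Dlin: "linear_over ?W E" if "E \<in> Dp" for E
    using add that cent_lin[OF that] unfolding linear_over_def additive_def by blast
  then show "Dp \<subseteq> {E. linear_over ?W E}" by blast
  obtain B where B: "finite B" "1 \<in> B" "spanF ?W B = UNIV" "indepF ?W B"
    using basis_exists[OF W G] by blast
  have "\<exists>P. P \<in> Dp \<and> P b = 1 \<and> (\<forall>b'\<in>B. b' \<noteq> b \<longrightarrow> P b' = 0)" if b: "b \<in> B" for b
  proof -
    have nb: "b \<notin> spanF ?W (B - {b})"
    proof
      assume "b \<in> spanF ?W (B - {b})"
      then obtain d where d: "\<forall>b'\<in>B - {b}. d b' \<in> ?W" "b = (\<Sum>b'\<in>B - {b}. d b' * b')"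
        unfolding spanF_def by blast
      let ?c = "\<lambda>b'. if b' = b then -1 else d b'"
      have "\<forall>b'\<in>B. ?c b' \<in> ?W" using d(1) subfield_uminus[OF W subfieldD(2)[OF W]] by auto
      moreover have "(\<Sum>b'\<in>B. ?c b' * b') = 0"
      proof -
        have "(\<Sum>b'\<in>B. ?c b' * b') = ?c b * b + (\<Sum>b'\<in>B - {b}. ?c b' * b')"
          by (rule sum.remove[OF B(1) b])
        also have "(\<Sum>b'\<in>B - {b}. ?c b' * b') = (\<Sum>b'\<in>B - {b}. d b' * b')" by (rule sum.cong) auto
        finally show ?thesis using d(2) by simp
      qed
      moreover have "(\<forall>b'\<in>B. ?c b' \<in> ?W) \<and> (\<Sum>b'\<in>B. ?c b' * b') = 0 \<longrightarrow> (\<forall>b'\<in>B. ?c b' = 0)"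
        using B(4) unfolding indepF_def by (rule spec)
      ultimately have "?c b = 0" using b by blast
      then show False by simp
    qed
    have fB': "finite (B - {b})" using B(1) by simp
    obtain r where r: "r \<in> Dp" "\<forall>s\<in>B - {b}. r s = 0" "r b \<noteq> 0"
      using density[OF add mult cl fB'] nb by blast
    let ?P = "mult_op (inverse (r b)) \<circ> r"
    have "?P \<in> Dp" using cl mult r(1) by blast
    moreover have "?P b = 1" using r(3) by (simp add: mult_op_def)
    moreover have "\<forall>b'\<in>B. b' \<noteq> b \<longrightarrow> ?P b' = 0" using r(2) by (simp add: mult_op_def)
    ultimately show ?thesis by blast
  qed
  then obtain P where P: "\<And>b. b \<in> B \<Longrightarrow> P b \<in> Dp \<and> P b b = 1 \<and> (\<forall>b'\<in>B. b' \<noteq> b \<longrightarrow> P b b' = 0)"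
    by metis
  have Plin: "P b (\<Sum>b'\<in>B. c b' * b') = c b" if b: "b \<in> B" and c: "\<forall>b'\<in>B. c b' \<in> ?W" for b c
  proof -
    have "P b (\<Sum>b'\<in>B. c b' * b') = (\<Sum>b'\<in>B. c b' * P b b')"
    proof (rule lin_sum)
      show "additive (P b)" using add P[OF b] by blast
      show "\<forall>a\<in>?W. \<forall>y. P b (a * y) = a * P b y" using cent_lin P[OF b] by blast
    qed (rule c)
    also have "\<dots> = (\<Sum>b'\<in>B. if b' = b then c b' else 0)"
      by (rule sum.cong) (use P[OF b] in auto)
    also have "\<dots> = c b" using B(1) b by simp
    finally show ?thesis .
  qed
  show "{E. linear_over ?W E} \<subseteq> Dp"
  proof
    fix E assume "E \<in> {E. linear_over ?W E}"
    then have E: "linear_over ?W E" by simp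
    let ?S = "\<Sum>b\<in>B. mult_op (E b) \<circ> P b"
    have "?S \<in> Dp" by (rule Dp_sum[OF mult cl B(1)]) (use P cl mult in blast)
    moreover have "?S = E"
    proof
      fix x
      obtain c where cW: "\<forall>b\<in>B. c b \<in> ?W" and xr: "x = (\<Sum>b\<in>B. c b * b)"
        using B(3) unfolding spanF_def by blast
      have "?S x = (\<Sum>b\<in>B. E b * P b x)" by (simp add: sum_fun_apply mult_op_def)
      also have "\<dots> = (\<Sum>b\<in>B. E b * c b)"
      proof (rule sum.cong[OF refl])
        fix b assume b: "b \<in> B"
        have "P b x = c b" unfolding xr by (rule Plin[OF b cW])
        then show "E b * P b x = E b * c b" by simp
      qed
      also have "\<dots> = E x"
      proof -
        have "E (\<Sum>b\<in>B. c b * b) = (\<Sum>b\<in>B. c b * E b)"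
        proof (rule lin_sum)
          show "additive E" using E linear_over_additive by blast
          show "\<forall>a\<in>?W. \<forall>y. E (a * y) = a * E y" using E unfolding linear_over_def by blast
        qed (rule cW)
        then have "E x = (\<Sum>b\<in>B. c b * E b)" using xr by simp
        then show ?thesis by (simp add: mult.commute)
      qed
      finally show "?S x = E x" .
    qed
    ultimately show "E \<in> Dp" by simp
  qed
qed

lemma double_cent:
  fixes W :: "'a::field set"
  assumes W: "subfield W" and G: "finite G" "spanF W G = UNIV"
  shows "cent {E. linear_over W E} = W"
proof
  show "W \<subseteq> cent {E. linear_over W E}" unfolding cent_def linear_over_def by auto
  obtain B where B: "finite B" "1 \<in> B" "spanF W B = UNIV" "indepF W B"
    using basis_exists[OF W G] by blast
  show "cent {E. linear_over W E} \<subseteq> W"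
  proof
    fix x assume x: "x \<in> cent {E. linear_over W E}"
    have "linear_over W (coord W B 1)" using coord_lin[OF W B(1,3,4,2)] .
    then have "x * coord W B 1 1 = coord W B 1 (x * 1)" using x unfolding cent_def by blast
    then have "x = coord W B 1 x" using coord_basis[OF W B(1,3,4) B(2) B(2)] by simp
    then show "x \<in> W" using coord_W[OF W B(1,3,4) B(2)] by metis
  qed
qed



lemma lin_zero: "linear_over W (0 :: 'a::field \<Rightarrow> 'a)"
  unfolding linear_over_def by simp

lemma lin_plus: "linear_over W E \<Longrightarrow> linear_over W F \<Longrightarrow> linear_over W (E + F)"
  unfolding linear_over_def by (simp add: algebra_simps)

lemma lin_multop: "linear_over W E \<Longrightarrow> linear_over W (mult_op c \<circ> E)"
  unfolding linear_over_def mult_op_def by (simp add: algebra_simps)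

lemma lin_fsum: "finite S \<Longrightarrow> \<forall>i\<in>S. linear_over W (f i) \<Longrightarrow> linear_over W (sum f S)"
proof (induction S rule: finite_induct)
  case empty then show ?case using lin_zero by (metis sum.empty)
next
  case (insert x S)
  then show ?case using lin_plus by (simp only: sum.insert[OF insert.hyps]) blast
qed

lemma dim_End:
  fixes W :: "'a::field set"
  assumes W: "subfield W" and G: "finite G" "spanF W G = UNIV"
  shows "same_dim (UNIV::'a set) (\<lambda>c E. mult_op c \<circ> E) {E. linear_over W E} W (\<lambda>c x. c * x) (UNIV::'a set)"
proof -
  obtain B where B: "finite B" "1 \<in> B" "spanF W B = UNIV" "indepF W B"
    using basis_exists[OF W G] by blast
  note ctx = W B(1,3,4)
  let ?co = "coord W B"
  let ?Phi = "?co ` B"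
  have inj: "inj_on ?co B" using coord_inj[OF ctx] .
  have B2: "basis_over W (\<lambda>c x. c * x) UNIV B"
    unfolding basis_over_def
  proof (intro conjI)
    show "B \<subseteq> UNIV" by simp
    show "indep_over W (\<lambda>c x. c * x) B" unfolding indep_over_def
    proof (intro allI impI ballI)
      fix S c b assume H: "finite S \<and> S \<subseteq> B \<and> (\<forall>b\<in>S. c b \<in> W) \<and> (\<Sum>b\<in>S. c b * b) = 0" and b: "b \<in> S"
      let ?c' = "\<lambda>b. if b \<in> S then c b else 0"
      have "(\<Sum>b\<in>B. ?c' b * b) = (\<Sum>b\<in>B. if b \<in> S then c b * b else 0)" by (rule sum.cong) auto
      also have "\<dots> = (\<Sum>b\<in>B \<inter> S. c b * b)" by (rule sum.inter_restrict[OF B(1), symmetric])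
      also have "B \<inter> S = S" using H by blast
      finally have s0: "(\<Sum>b\<in>B. ?c' b * b) = 0" using H by simp
      have cw: "\<forall>b\<in>B. ?c' b \<in> W" using H subfieldD(1)[OF W] by auto
      have "(\<forall>b\<in>B. ?c' b \<in> W) \<and> (\<Sum>b\<in>B. ?c' b * b) = 0 \<longrightarrow> (\<forall>b\<in>B. ?c' b = 0)"
        using B(4) unfolding indepF_def by (rule spec)
      then have "?c' b = 0" using s0 cw b H by blast
      then show "c b = 0" using b by simp
    qed
    show "span_over W (\<lambda>c x. c * x) B = UNIV"
    proof (rule set_eqI, rule iffI)
      fix v :: 'a assume "v \<in> UNIV"
      then have "v \<in> spanF W B" using B(3) by simp
      then obtain c where "\<forall>b\<in>B. c b \<in> W" "v = (\<Sum>b\<in>B. c b * b)" unfolding spanF_def by blast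
      then show "v \<in> span_over W (\<lambda>c x. c * x) B" unfolding span_over_def using B(1)
        by (intro CollectI exI[of _ B] exI[of _ c]) simp
    qed simp
  qed
  have B1: "basis_over UNIV (\<lambda>c E. mult_op c \<circ> E) {E. linear_over W E} ?Phi"
    unfolding basis_over_def
  proof (intro conjI)
    show "?Phi \<subseteq> {E. linear_over W E}" using coord_lin[OF ctx] by blast
    show "indep_over UNIV (\<lambda>c E. mult_op c \<circ> E) ?Phi" unfolding indep_over_def
    proof (intro allI impI ballI)
      fix S c E assume H: "finite S \<and> S \<subseteq> ?Phi \<and> (\<forall>b\<in>S. c b \<in> UNIV) \<and> (\<Sum>F\<in>S. mult_op (c F) \<circ> F) = 0"
        and E: "E \<in> S"
      obtain b0 where b0: "b0 \<in> B" "E = ?co b0" using E H by blast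
      have "(\<Sum>F\<in>S. mult_op (c F) \<circ> F) b0 = 0" using H by simp
      then have s0: "(\<Sum>F\<in>S. c F * F b0) = 0" by (simp add: sum_fun_apply mult_op_def)
      have "(\<Sum>F\<in>S. c F * F b0) = (\<Sum>F\<in>S. if F = E then c F else 0)"
      proof (rule sum.cong[OF refl])
        fix F assume F: "F \<in> S"
        then obtain b' where b': "b' \<in> B" "F = ?co b'" using H by blast
        have "F b0 = (if b' = b0 then 1 else 0)" using coord_basis[OF ctx b'(1) b0(1)] b'(2) by simp
        moreover have "(F = E) = (b' = b0)" using inj b'(1) b0(1) b'(2) b0(2) by (auto dest: inj_onD)
        ultimately show "c F * F b0 = (if F = E then c F else 0)" by simp
      qed
      also have "\<dots> = c E" using H E by simp
      finally show "c E = 0" using s0 by simp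
    qed
    show "span_over UNIV (\<lambda>c E. mult_op c \<circ> E) ?Phi = {E. linear_over W E}"
    proof (rule set_eqI, rule iffI)
      fix v assume "v \<in> span_over UNIV (\<lambda>c E. mult_op c \<circ> E) ?Phi"
      then obtain S c where H: "finite S" "S \<subseteq> ?Phi" "v = (\<Sum>F\<in>S. mult_op (c F) \<circ> F)"
        unfolding span_over_def by blast
      have "\<forall>F\<in>S. linear_over W (mult_op (c F) \<circ> F)"
        using H(2) coord_lin[OF ctx] lin_multop by blast
      then show "v \<in> {E. linear_over W E}" using lin_fsum[OF H(1)] H(3) by simp
    next
      fix E assume "E \<in> {E. linear_over W E}"
      then have E: "linear_over W E" by simp
      let ?c = "\<lambda>F. E (inv_into B ?co F)"
      have "(\<Sum>F\<in>?Phi. mult_op (?c F) \<circ> F) = (\<Sum>b\<in>B. mult_op (?c (?co b)) \<circ> ?co b)"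
        by (rule sum.reindex[OF inj, unfolded comp_def])
      also have "\<dots> = (\<Sum>b\<in>B. mult_op (E b) \<circ> ?co b)"
        by (rule sum.cong) (auto simp: inv_into_f_f[OF inj])
      also have "\<dots> = E"
      proof
        fix x
        have "(\<Sum>b\<in>B. mult_op (E b) \<circ> ?co b) x = (\<Sum>b\<in>B. ?co b x * E b)"
          by (simp add: sum_fun_apply mult_op_def mult.commute)
        also have "\<dots> = E (\<Sum>b\<in>B. ?co b x * b)"
        proof (rule lin_sum[symmetric])
          show "additive E" using E linear_over_additive by blast
          show "\<forall>a\<in>W. \<forall>y. E (a * y) = a * E y" using E unfolding linear_over_def by blast
          show "\<forall>b\<in>B. ?co b x \<in> W" using coord_W[OF ctx] by blast
        qed
        also have "(\<Sum>b\<in>B. ?co b x * b) = x" using coord_x[OF ctx, of x] by (rule sym)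
        finally show "(\<Sum>b\<in>B. mult_op (E b) \<circ> ?co b) x = E x" .
      qed
      finally have "E = (\<Sum>F\<in>?Phi. mult_op (?c F) \<circ> F)" by simp
      moreover have "finite ?Phi" using B(1) by simp
      ultimately show "E \<in> span_over UNIV (\<lambda>c E. mult_op c \<circ> E) ?Phi"
        unfolding span_over_def by (intro CollectI exI[of _ ?Phi] exI[of _ ?c]) simp
    qed
  qed
  have bij: "bij_betw (inv_into B ?co) ?Phi B"
    by (rule bij_betw_inv_into[OF inj_on_imp_bij_betw[OF inj]])
  show ?thesis unfolding same_dim_def by (intro exI[of _ ?Phi] exI[of _ B] exI[of _ "inv_into B ?co"] conjI B1 B2 bij)
qed



lemma lin_mono: "B \<subseteq> A \<Longrightarrow> linear_over A E \<Longrightarrow> linear_over B E"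
  unfolding linear_over_def by blast

lemma lin_comp: "linear_over A E \<Longrightarrow> linear_over A F \<Longrightarrow> linear_over A (E \<circ> F)"
  unfolding linear_over_def by simp

lemma lin_un: "linear_over A E \<Longrightarrow> linear_over B E \<Longrightarrow> linear_over (A \<union> B) E"
  unfolding linear_over_def by blast

lemma lin_mult_op: "linear_over A (mult_op c)"
  unfolding linear_over_def mult_op_def by (simp add: algebra_simps)

lemma Diff_anti: "B \<subseteq> A \<Longrightarrow> Diff A \<subseteq> Diff B"
  unfolding Diff_def using lin_mono by blast

context
  fixes p :: nat
  assumes ch: "CHAR('a::field) = p" and pp: "prime p" and fg: "fin_gen_over (perfect_core p :: 'a set)"
begin

lemma span_over_L:
  assumes "subfield (W :: 'a set)" "frob_pow p n \<subseteq> W"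
  shows "\<exists>G. finite G \<and> spanF W G = UNIV"
proof -
  obtain G where "finite G" "spanF (frob_pow p n) G = (UNIV :: 'a set)" using fin_span[OF ch pp fg] by blast
  then show ?thesis using span_scal_mono[OF assms(2), of G] by blast
qed

lemma Diff_eq:
  assumes "frob_pow p n \<subseteq> (A :: 'a set)"
  shows "Diff A = {E. linear_over A E}"
proof
  show "Diff A \<subseteq> {E. linear_over A E}" unfolding Diff_def by blast
  show "{E. linear_over A E} \<subseteq> Diff A"
  proof
    fix E assume "E \<in> {E. linear_over A E}"
    then have E: "linear_over A E" by simp
    then have EL: "linear_over (frob_pow p n) E" using lin_mono[OF assms] by blast
    obtain G where G: "finite G" "spanF (frob_pow p n) G = (UNIV :: 'a set)" using fin_span[OF ch pp fg] by blast
    have "diff_ord (card G * (p ^ n - 1)) E"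
    proof (rule finite_order[OF frob_subfield[OF ch pp] G])
      show "\<forall>x::'a. x ^ p ^ n \<in> frob_pow p n" using frob_mem by blast
      show "\<forall>h::'a. fold comm_op (replicate (p ^ n) h) = comm_op (h ^ p ^ n)" using comm_pow_char_n[OF ch pp] by blast
    qed (rule EL)
    then show "E \<in> Diff A" using E unfolding Diff_def by blast
  qed
qed

lemma part1:
  fixes W :: "nat \<Rightarrow> 'a set"
  assumes pt: "power_tower p W"
  shows "K_subalgebra (Diff_tower W) \<and> Diff_tower W \<subseteq> Diff (perfect_core p) \<and> tower_of p (Diff_tower W) = W"
proof -
  have sf: "subfield (W i)" for i using pt unfolding power_tower_def by blast
  have Wgen: "j \<le> i \<Longrightarrow> W j = gen_field (W i \<union> frob_pow p j)" for i j
    using pt unfolding power_tower_def compositum_def by blast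
  have LW: "frob_pow p i \<subseteq> W i" for i using Wgen[of i i] gen_field_sup by blast
  have anti: "j \<le> i \<Longrightarrow> W i \<subseteq> W j" for i j using Wgen gen_field_sup by blast
  have DW: "Diff (W m) = {E. linear_over (W m) E}" for m using Diff_eq[OF LW] .
  have K: "K_subalgebra (Diff_tower W)" unfolding K_subalgebra_def Diff_tower_def
  proof (intro conjI allI ballI)
    fix c show "mult_op c \<in> (\<Union>n. Diff (W n))" using DW[of 0] lin_mult_op by blast
  next
    fix E F assume E: "E \<in> (\<Union>n. Diff (W n))" and F: "F \<in> (\<Union>n. Diff (W n))"
    then obtain m m' where "linear_over (W m) E" "linear_over (W m') F" using DW by blast
    then have "linear_over (W (max m m')) E" "linear_over (W (max m m')) F"
      using lin_mono anti by (meson max.cobounded1 max.cobounded2)+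
    then have "E + F \<in> Diff (W (max m m'))" "E \<circ> F \<in> Diff (W (max m m'))"
      using lin_plus lin_comp DW by blast+
    then show "E + F \<in> (\<Union>n. Diff (W n))" "E \<circ> F \<in> (\<Union>n. Diff (W n))" by blast+
  qed
  have sub: "Diff_tower W \<subseteq> Diff (perfect_core p)"
    unfolding Diff_tower_def using Diff_anti core_sub LW by (meson UN_least order_trans)
  have "tower_of p (Diff_tower W) n = W n" for n
  proof -
    have "D_level p (Diff_tower W) n = {E. linear_over (W n) E}"
    proof
      show "D_level p (Diff_tower W) n \<subseteq> {E. linear_over (W n) E}"
      proof
        fix E assume "E \<in> D_level p (Diff_tower W) n"
        then obtain m where Em: "linear_over (W m) E" and En: "linear_over (frob_pow p n) E"
          unfolding D_level_def Diff_tower_def Diff_def by blast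
        show "E \<in> {E. linear_over (W n) E}"
        proof (cases "m \<le> n")
          case True then show ?thesis using lin_mono[OF anti[OF True] Em] by simp
        next
          case False
          then have "W n = gen_field (W m \<union> frob_pow p n)" using Wgen by simp
          then show ?thesis using linear_over_gen[OF lin_un[OF Em En]] by simp
        qed
      qed
      show "{E. linear_over (W n) E} \<subseteq> D_level p (Diff_tower W) n"
      proof
        fix E assume "E \<in> {E. linear_over (W n) E}"
        then have E: "linear_over (W n) E" by simp
        then have "E \<in> Diff_tower W" unfolding Diff_tower_def using DW by blast
        moreover have "E \<in> Diff (frob_pow p n)" using Diff_eq[of n "frob_pow p n"] lin_mono[OF LW E] by blast
        ultimately show "E \<in> D_level p (Diff_tower W) n" unfolding D_level_def by blast
      qed
    qed
    moreover obtain G where "finite G" "spanF (W n) G = UNIV" using span_over_L[OF sf LW] by blast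
    ultimately show ?thesis unfolding tower_of_cent using double_cent[OF sf] by metis
  qed
  then show ?thesis using K sub by auto
qed

lemma part23:
  fixes D :: "('a \<Rightarrow> 'a) set"
  assumes K: "K_subalgebra D" and DS: "D \<subseteq> Diff (perfect_core p)"
  shows "(power_tower p (tower_of p D) \<and> Diff_tower (tower_of p D) = D) \<and>
    (\<forall>i. same_dim (UNIV::'a set) (\<lambda>c E. mult_op c \<circ> E) (D_level p D i)
                           (tower_of p D i) (\<lambda>c x. c * x) (UNIV::'a set))"
proof -
  let ?V = "tower_of p D"
  have Kc: "\<forall>c. mult_op c \<in> D" "\<forall>E\<in>D. \<forall>F\<in>D. E + F \<in> D \<and> E \<circ> F \<in> D" using K unfolding K_subalgebra_def by blast+
  have DL: "D_level p D n = D \<inter> {E. linear_over (frob_pow p n) E}" for n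
    unfolding D_level_def using Diff_eq[of n "frob_pow p n"] by simp
  have props: "subfield (?V n) \<and> frob_pow p n \<subseteq> ?V n \<and> D_level p D n = {E. linear_over (?V n) E}" for n
  proof -
    let ?Dp = "D_level p D n"
    have add: "\<forall>E\<in>?Dp. additive E" using DL linear_over_additive by blast
    have mult: "\<forall>c. mult_op c \<in> ?Dp" using DL Kc(1) lin_mult_op by blast
    have cl: "\<forall>E\<in>?Dp. \<forall>F\<in>?Dp. E + F \<in> ?Dp \<and> E \<circ> F \<in> ?Dp"
    proof (intro ballI conjI)
      fix E F assume "E \<in> ?Dp" "F \<in> ?Dp"
      then have "E \<in> D" "F \<in> D" "linear_over (frob_pow p n) E" "linear_over (frob_pow p n) F"
        unfolding DL by blast+
      then show "E + F \<in> ?Dp" "E \<circ> F \<in> ?Dp" unfolding DL using Kc(2) lin_plus lin_comp by blast+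
    qed
    have sfV: "subfield (?V n)" unfolding tower_of_cent using cent_subfield[OF add] .
    have LV: "frob_pow p n \<subseteq> ?V n" unfolding tower_of_cent cent_def
    proof (intro subsetI CollectI ballI allI)
      fix l :: 'a and E y assume l: "l \<in> frob_pow p n" and E: "E \<in> ?Dp"
      then have "linear_over (frob_pow p n) E" unfolding DL by blast
      then show "l * E y = E (l * y)" using l unfolding linear_over_def by simp
    qed
    obtain G where G: "finite G" "spanF (?V n) G = UNIV" using span_over_L[OF sfV LV] by blast
    have G2: "spanF (cent ?Dp) G = UNIV" using G(2) unfolding tower_of_cent .
    have "?Dp = {E. linear_over (cent ?Dp) E}" by (rule JB[OF add mult cl G(1) G2])
    then have "?Dp = {E. linear_over (?V n) E}" unfolding tower_of_cent .
    then show ?thesis using sfV LV by blast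
  qed
  have pt: "power_tower p ?V" unfolding power_tower_def
  proof (intro conjI allI impI)
    fix i show "subfield (?V i)" using props by blast
  next
    fix i j :: nat assume ji: "j \<le> i"
    let ?M = "gen_field (?V i \<union> frob_pow p j)"
    have sfM: "subfield ?M" by (rule gen_field_subfield)
    have sup: "?V i \<union> frob_pow p j \<subseteq> ?M" by (rule gen_field_sup)
    have LM: "frob_pow p j \<subseteq> ?M" using sup by blast
    have VM: "?V i \<subseteq> ?M" using sup by blast
    have Lij: "frob_pow p i \<subseteq> (frob_pow p j :: 'a set)" using frob_anti[OF ji] .
    have Vi: "D_level p D i = {E. linear_over (?V i) E}" using props by blast
    have DLi: "D_level p D i = D \<inter> {E. linear_over (frob_pow p i) E}" by (rule DL)
    have DLj: "D_level p D j = D \<inter> {E. linear_over (frob_pow p j) E}" by (rule DL)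
    have "D_level p D j = {E. linear_over ?M E}"
    proof
      show "D_level p D j \<subseteq> {E. linear_over ?M E}"
      proof
        fix E assume E: "E \<in> D_level p D j"
        have ED: "E \<in> D" and Ej: "linear_over (frob_pow p j) E" using E unfolding DLj by simp_all
        have Ei: "linear_over (frob_pow p i) E" using lin_mono[OF Lij Ej] .
        have "E \<in> D_level p D i" unfolding DLi using ED Ei by simp
        then have EV: "linear_over (?V i) E" unfolding Vi by simp
        have "linear_over ?M E" using linear_over_gen[OF lin_un[OF EV Ej]] .
        then show "E \<in> {E. linear_over ?M E}" by simp
      qed
      show "{E. linear_over ?M E} \<subseteq> D_level p D j"
      proof
        fix E assume "E \<in> {E. linear_over ?M E}"
        then have EM: "linear_over ?M E" by simp
        have "linear_over (?V i) E" using lin_mono[OF VM EM] .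
        then have "E \<in> D_level p D i" unfolding Vi by simp
        then have ED: "E \<in> D" unfolding DLi by simp
        have "linear_over (frob_pow p j) E" using lin_mono[OF LM EM] .
        then show "E \<in> D_level p D j" unfolding DLj using ED by simp
      qed
    qed
    moreover obtain G where G: "finite G" "spanF ?M G = UNIV" using span_over_L[OF sfM LM] by blast
    ultimately have "?V j = cent {E. linear_over ?M E}" unfolding tower_of_cent by simp
    also have "\<dots> = ?M" by (rule double_cent[OF sfM G])
    finally show "?V j = compositum (?V i) (frob_pow p j)" unfolding compositum_def .
  qed
  have DT: "Diff_tower ?V = D"
  proof -
    have DVn: "Diff (?V n) = D_level p D n" for n
    proof -
      have "frob_pow p n \<subseteq> ?V n" "D_level p D n = {E. linear_over (?V n) E}" using props by blast+
      then show ?thesis using Diff_eq[of n "?V n"] by simp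
    qed
    have "Diff_tower ?V \<subseteq> D" unfolding Diff_tower_def DVn D_level_def by blast
    moreover have "D \<subseteq> Diff_tower ?V"
    proof
      fix E assume E: "E \<in> D"
      then obtain n where "E \<in> Diff (frob_pow p n)" using Diff_core_sub[OF ch pp] DS by blast
      then have "E \<in> D_level p D n" using E unfolding D_level_def by blast
      then show "E \<in> Diff_tower ?V" unfolding Diff_tower_def DVn by blast
    qed
    ultimately show ?thesis by blast
  qed
  have dim: "same_dim (UNIV::'a set) (\<lambda>c E. mult_op c \<circ> E) (D_level p D i)
                           (?V i) (\<lambda>c x. c * x) (UNIV::'a set)" for i
  proof -
    have pi: "subfield (?V i)" "frob_pow p i \<subseteq> ?V i" "D_level p D i = {E. linear_over (?V i) E}"
      using props by blast+
    obtain G where "finite G" "spanF (?V i) G = UNIV" using span_over_L[OF pi(1,2)] by blast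
    then show ?thesis unfolding pi(3) by (rule dim_End[OF pi(1)])
  qed
  show ?thesis using pt DT dim by blast
qed

end

theorem mainTheorem5:
  fixes p :: nat
  assumes "CHAR('a::field) = p" and "p > 0"
    and "fin_gen_over (perfect_core p :: 'a set)"
  shows "(\<forall>W::nat \<Rightarrow> 'a set. power_tower p W \<longrightarrow>
            K_subalgebra (Diff_tower W) \<and> Diff_tower W \<subseteq> Diff (perfect_core p) \<and>
            tower_of p (Diff_tower W) = W)
       \<and> (\<forall>\<D>::('a \<Rightarrow> 'a) set. K_subalgebra \<D> \<and> \<D> \<subseteq> Diff (perfect_core p) \<longrightarrow>
            power_tower p (tower_of p \<D>) \<and> Diff_tower (tower_of p \<D>) = \<D>)
       \<and> (\<forall>\<D>::('a \<Rightarrow> 'a) set. K_subalgebra \<D> \<and> \<D> \<subseteq> Diff (perfect_core p) \<longrightarrow>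
            (\<forall>i. same_dim (UNIV::'a set) (\<lambda>c E. mult_op c \<circ> E) (D_level p \<D> i)
                           (tower_of p \<D> i) (\<lambda>c x. c * x) (UNIV::'a set)))"
proof -
  have pp: "prime p" using prime_CHAR_semidom[where 'a='a] assms(1,2) by simp
  show ?thesis using part1[OF assms(1) pp assms(3)] part23[OF assms(1) pp assms(3)] by blast
qed


end
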